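(* Let $d\ge0$ and let $a\in\mathbb K[A]$ be an irreducible, homogeneous, isobaric element invariant under $UT_3$ (i.e. $D_1(a)=D_2(a)=D_3(a)=0$) with $\mathrm{ord}_1(a)=0$ and $\mathrm{ord}_2(a)=d$. Then: (i) the vector space $\bar C_d$ spanned by the elements $\frac{(-1)^{i+j}}{d(d-1)\cdots(d-i-j+1)}\hat D_2^{j}\hat D_3^{i}(a)$, $i+j\le d$, is an irreducible $\mathfrak{sl}_3$-submodule of $\mathbb K[A]$ isomorphic to $\Gamma_{0,d}$; (ii) the element $$\sum_{i+j\le d}\frac{(-1)^{i+j}}{i!\,j!}\,\hat D_2^{j}\hat D_3^{i}(a)\,u_3^{d-(i+j)}u_1^{i}u_2^{j}\in\mathbb K[A,u_1,u_2,u_3]$$ (the Casimir element of $\bar C_d$ and $S^d(\langle u_1,u_2,u_3\rangle)$ with respect to dual bases) is a contravariant of order $d$ of the ternary form of degree $n$.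
   Context: $\mathbb K$ is a field of characteristic $0$, $n\ge1$, $\mathbb K[A]=\mathbb K[a_{i,j}: i,j\ge0,\ i+j\le n]$ is the coordinate ring of the space of ternary forms $\sum_{i+j\le n}\frac{n!}{i!j!(n-i-j)!}a_{i,j}x_1^{n-i-j}x_2^ix_3^j$. $\mathfrak{sl}_3$ acts by derivations on $\mathbb K[A,u_1,u_2,u_3]$; the operators for $E_{12},E_{23},E_{13},E_{21},E_{32},E_{31},E_{11}-E_{22},E_{22}-E_{33}$ are $D_1,D_2,D_3,\hat D_1,\hat D_2,\hat D_3,E_1,E_2$. On generators of $\mathbb K[A]$ (with $a_{i,j}=0$ if an index is negative or $i+j>n$): $D_1(a_{i,j})=i a_{i-1,j}$, $D_2(a_{i,j})=j a_{i+1,j-1}$, $D_3(a_{i,j})=j a_{i,j-1}$, $\hat D_1(a_{i,j})=(n-i-j)a_{i+1,j}$, $\hat D_2(a_{i,j})=i a_{i-1,j+1}$, $\hat D_3(a_{i,j})=(n-i-j)a_{i,j+1}$, $E_1(a_{i,j})=(n-2i-j)a_{i,j}$, $E_2(a_{i,j})=(i-j)a_{i,j}$. On the $u$'s (dual of the standard module, $x_1u_1+x_2u_2+x_3u_3$ invariant): $D_1=u_1\partial_{u_2}$, $D_2=u_2\partial_{u_3}$, $D_3=u_1\partial_{u_3}$, $\hat D_1=u_2\partial_{u_1}$, $\hat D_2=u_3\partial_{u_2}$, $\hat D_3=u_3\partial_{u_1}$, $E_1=u_1\partial_{u_1}-u_2\partial_{u_2}$, $E_2=u_2\partial_{u_2}-u_3\partial_{u_3}$.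 Isobaric means an eigenvector of both $E_1,E_2$; $\mathrm{ord}_i(a)=\max\{s\ge0:\hat D_i^s(a)\ne0\}$. "Irreducible" element of $\mathbb K[A]^{UT_3}$ is used in the classical sense (nonzero, not a polynomial in $UT_3$-invariants of smaller degree). A contravariant of order $d$ is an element of $\mathbb K[A,u_1,u_2,u_3]$ homogeneous of degree $d$ in the $u$'s and annihilated by all these derivations (equivalently $SL_3$-invariant). $\Gamma_{m_1,m_2}$ denotes the irreducible finite-dimensional $\mathfrak{sl}_3$-module of highest weight $[m_1,m_2]$. *)

theory Defs
  imports Complex_Main "HOL-Library.Poly_Mapping"
begin

text \<open>Variables: A i j stands for the coefficient a_{i,j}; U k stands for u_k (k = 1,2,3).
  Polynomials are finitely supported maps from monomials (finitely supported exponent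
  vectors) to coefficients.\<close>

datatype var = A nat nat | U nat

type_synonym 'k mpoly = "(var \<Rightarrow>\<^sub>0 nat) \<Rightarrow>\<^sub>0 'k"

definition Const :: "'k::comm_ring_1 \<Rightarrow> 'k mpoly" where
  "Const c = Poly_Mapping.single 0 c"

definition Var :: "var \<Rightarrow> 'k::comm_ring_1 mpoly" where
  "Var x = Poly_Mapping.single (Poly_Mapping.single x 1) 1"

definition scl :: "'k::comm_ring_1 \<Rightarrow> 'k mpoly \<Rightarrow> 'k mpoly" where
  "scl c p = Const c * p"

definition vars :: "'k::comm_ring_1 mpoly \<Rightarrow> var set" where
  "vars p = \<Union> (Poly_Mapping.keys ` Poly_Mapping.keys p)"

definition tdeg :: "(var \<Rightarrow>\<^sub>0 nat) \<Rightarrow> nat" where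
  "tdeg m = (\<Sum>x\<in>Poly_Mapping.keys m. Poly_Mapping.lookup m x)"

definition udeg :: "(var \<Rightarrow>\<^sub>0 nat) \<Rightarrow> nat" where
  "udeg m = (\<Sum>x\<in>Poly_Mapping.keys m. (case x of U _ \<Rightarrow> Poly_Mapping.lookup m x | A _ _ \<Rightarrow> 0))"

definition pdeg :: "'k::comm_ring_1 mpoly \<Rightarrow> nat" where
  "pdeg p = (if p = 0 then 0 else Max (tdeg ` Poly_Mapping.keys p))"

definition homogeneous :: "'k::comm_ring_1 mpoly \<Rightarrow> bool" where
  "homogeneous p \<longleftrightarrow> (\<exists>k. \<forall>m\<in>Poly_Mapping.keys p. tdeg m = k)"

definition pdv :: "var \<Rightarrow> 'k::comm_ring_1 mpoly \<Rightarrow> 'k mpoly" where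
  "pdv x p = (\<Sum>m\<in>Poly_Mapping.keys p.
      Poly_Mapping.single (m - Poly_Mapping.single x 1) (of_nat (Poly_Mapping.lookup m x) * Poly_Mapping.lookup p m))"

definition der :: "(var \<Rightarrow> 'k::comm_ring_1 mpoly) \<Rightarrow> 'k mpoly \<Rightarrow> 'k mpoly" where
  "der g p = (\<Sum>x\<in>vars p. g x * pdv x p)"

definition KA :: "nat \<Rightarrow> 'k::comm_ring_1 mpoly set" where
  "KA n = {p. vars p \<subseteq> {A i j | i j. i + j \<le> n}}"

definition KAU :: "nat \<Rightarrow> 'k::comm_ring_1 mpoly set" where
  "KAU n = {p. vars p \<subseteq> {A i j | i j. i + j \<le> n} \<union> {U 1, U 2, U 3}}"

definition aa :: "nat \<Rightarrow> nat \<Rightarrow> nat \<Rightarrow> 'k::comm_ring_1 mpoly" where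
  "aa n i j = (if i + j \<le> n then Var (A i j) else 0)"

fun gD1 :: "nat \<Rightarrow> var \<Rightarrow> 'k::comm_ring_1 mpoly" where
  "gD1 n (A i j) = (if i + j \<le> n \<and> i \<ge> 1 then of_nat i * aa n (i - 1) j else 0)"
| "gD1 n (U k) = (if k = 2 then Var (U 1) else 0)"

fun gD2 :: "nat \<Rightarrow> var \<Rightarrow> 'k::comm_ring_1 mpoly" where
  "gD2 n (A i j) = (if i + j \<le> n \<and> j \<ge> 1 then of_nat j * aa n (i + 1) (j - 1) else 0)"
| "gD2 n (U k) = (if k = 3 then Var (U 2) else 0)"

fun gD3 :: "nat \<Rightarrow> var \<Rightarrow> 'k::comm_ring_1 mpoly" where
  "gD3 n (A i j) = (if i + j \<le> n \<and> j \<ge> 1 then of_nat j * aa n i (j - 1) else 0)"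
| "gD3 n (U k) = (if k = 3 then Var (U 1) else 0)"

fun gH1 :: "nat \<Rightarrow> var \<Rightarrow> 'k::comm_ring_1 mpoly" where
  "gH1 n (A i j) = (if i + j \<le> n then of_nat (n - i - j) * aa n (i + 1) j else 0)"
| "gH1 n (U k) = (if k = 1 then Var (U 2) else 0)"

fun gH2 :: "nat \<Rightarrow> var \<Rightarrow> 'k::comm_ring_1 mpoly" where
  "gH2 n (A i j) = (if i + j \<le> n \<and> i \<ge> 1 then of_nat i * aa n (i - 1) (j + 1) else 0)"
| "gH2 n (U k) = (if k = 2 then Var (U 3) else 0)"

fun gH3 :: "nat \<Rightarrow> var \<Rightarrow> 'k::comm_ring_1 mpoly" where
  "gH3 n (A i j) = (if i + j \<le> n then of_nat (n - i - j) * aa n i (j + 1) else 0)"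
| "gH3 n (U k) = (if k = 1 then Var (U 3) else 0)"

fun gE1 :: "nat \<Rightarrow> var \<Rightarrow> 'k::comm_ring_1 mpoly" where
  "gE1 n (A i j) = (if i + j \<le> n then of_int (int n - 2 * int i - int j) * aa n i j else 0)"
| "gE1 n (U k) = (if k = 1 then Var (U 1) else if k = 2 then - Var (U 2) else 0)"

fun gE2 :: "nat \<Rightarrow> var \<Rightarrow> 'k::comm_ring_1 mpoly" where
  "gE2 n (A i j) = (if i + j \<le> n then of_int (int i - int j) * aa n i j else 0)"
| "gE2 n (U k) = (if k = 2 then Var (U 2) else if k = 3 then - Var (U 3) else 0)"

definition D1 :: "nat \<Rightarrow> 'k::comm_ring_1 mpoly \<Rightarrow> 'k mpoly" where "D1 n = der (gD1 n)"
definition D2 :: "nat \<Rightarrow> 'k::comm_ring_1 mpoly \<Rightarrow> 'k mpoly" where "D2 n = der (gD2 n)"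
definition D3 :: "nat \<Rightarrow> 'k::comm_ring_1 mpoly \<Rightarrow> 'k mpoly" where "D3 n = der (gD3 n)"
definition Dh1 :: "nat \<Rightarrow> 'k::comm_ring_1 mpoly \<Rightarrow> 'k mpoly" where "Dh1 n = der (gH1 n)"
definition Dh2 :: "nat \<Rightarrow> 'k::comm_ring_1 mpoly \<Rightarrow> 'k mpoly" where "Dh2 n = der (gH2 n)"
definition Dh3 :: "nat \<Rightarrow> 'k::comm_ring_1 mpoly \<Rightarrow> 'k mpoly" where "Dh3 n = der (gH3 n)"
definition E1 :: "nat \<Rightarrow> 'k::comm_ring_1 mpoly \<Rightarrow> 'k mpoly" where "E1 n = der (gE1 n)"
definition E2 :: "nat \<Rightarrow> 'k::comm_ring_1 mpoly \<Rightarrow> 'k mpoly" where "E2 n = der (gE2 n)"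

definition sl3_ops :: "nat \<Rightarrow> ('k::comm_ring_1 mpoly \<Rightarrow> 'k mpoly) set" where
  "sl3_ops n = {D1 n, D2 n, D3 n, Dh1 n, Dh2 n, Dh3 n, E1 n, E2 n}"

definition isobaric :: "nat \<Rightarrow> 'k::comm_ring_1 mpoly \<Rightarrow> bool" where
  "isobaric n p \<longleftrightarrow> (\<exists>c1 c2. E1 n p = scl c1 p \<and> E2 n p = scl c2 p)"

definition UT3_inv :: "nat \<Rightarrow> 'k::comm_ring_1 mpoly \<Rightarrow> bool" where
  "UT3_inv n p \<longleftrightarrow> p \<in> KA n \<and> D1 n p = 0 \<and> D2 n p = 0 \<and> D3 n p = 0"

definition ord :: "('k::comm_ring_1 mpoly \<Rightarrow> 'k mpoly) \<Rightarrow> 'k mpoly \<Rightarrow> nat" where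
  "ord D p = (GREATEST s. (D ^^ s) p \<noteq> 0)"

inductive_set alg_gen :: "'k::comm_ring_1 mpoly set \<Rightarrow> 'k mpoly set" for S where
  const: "Const c \<in> alg_gen S"
| gen: "s \<in> S \<Longrightarrow> s \<in> alg_gen S"
| add: "p \<in> alg_gen S \<Longrightarrow> q \<in> alg_gen S \<Longrightarrow> p + q \<in> alg_gen S"
| mult: "p \<in> alg_gen S \<Longrightarrow> q \<in> alg_gen S \<Longrightarrow> p * q \<in> alg_gen S"

text \<open>irreducible UT3-invariant (classical sense): nonzero, not a polynomial in
  UT3-invariants of smaller degree\<close>
definition irreducible_UT3 :: "nat \<Rightarrow> 'k::comm_ring_1 mpoly \<Rightarrow> bool" where
  "irreducible_UT3 n a \<longleftrightarrow> a \<noteq> 0 \<and> UT3_inv n a \<and>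
     a \<notin> alg_gen {b. UT3_inv n b \<and> pdeg b < pdeg a}"

text \<open>V is an sl3-submodule of K[A] isomorphic to Gamma_{m1,m2}: a finite-dimensional
  subspace stable under the operators, irreducible, with a highest weight vector
  of weight [m1,m2].\<close>
definition sl3_submodule :: "nat \<Rightarrow> 'k::field mpoly set \<Rightarrow> bool" where
  "sl3_submodule n V \<longleftrightarrow> module.subspace scl V \<and> V \<subseteq> KA n \<and>
     (\<forall>D\<in>sl3_ops n. \<forall>v\<in>V. D v \<in> V)"

definition irreducible_sl3_submodule :: "nat \<Rightarrow> 'k::field mpoly set \<Rightarrow> bool" where
  "irreducible_sl3_submodule n V \<longleftrightarrow> sl3_submodule n V \<and> V \<noteq> {0} \<and>
     (\<forall>W. sl3_submodule n W \<and> W \<subseteq> V \<longrightarrow> W = {0} \<or> W = V)"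

definition iso_Gamma :: "nat \<Rightarrow> 'k::field mpoly set \<Rightarrow> nat \<Rightarrow> nat \<Rightarrow> bool" where
  "iso_Gamma n V m1 m2 \<longleftrightarrow> irreducible_sl3_submodule n V \<and>
     (\<exists>B. finite B \<and> V = module.span scl B) \<and>
     (\<exists>v\<in>V. v \<noteq> 0 \<and> D1 n v = 0 \<and> D2 n v = 0 \<and> D3 n v = 0 \<and>
        E1 n v = scl (of_nat m1) v \<and> E2 n v = scl (of_nat m2) v)"

definition contravariant :: "nat \<Rightarrow> nat \<Rightarrow> 'k::comm_ring_1 mpoly \<Rightarrow> bool" where
  "contravariant n d P \<longleftrightarrow> P \<in> KAU n \<and> (\<forall>m\<in>Poly_Mapping.keys P. udeg m = d) \<and>
     (\<forall>D\<in>sl3_ops n. D P = 0)"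

end

theory Submission
  imports Defs
begin



lemma Const_0[simp]: "Const 0 = (0::'k::comm_ring_1 mpoly)"
  by (simp add: Const_def)
lemma Const_1[simp]: "Const 1 = (1::'k::comm_ring_1 mpoly)"
  by (simp add: Const_def)
lemma Const_add: "Const (a + b) = (Const a + Const b :: 'k::comm_ring_1 mpoly)"
  by (simp add: Const_def single_add)
lemma Const_mult: "Const (a * b) = (Const a * Const b :: 'k::comm_ring_1 mpoly)"
  by (simp add: Const_def mult_single)
lemma Const_minus: "Const (- a) = (- Const a :: 'k::comm_ring_1 mpoly)"
  by (simp add: Const_def single_uminus)
lemma Const_diff: "Const (a - b) = (Const a - Const b :: 'k::comm_ring_1 mpoly)"
  by (simp add: Const_def single_diff)
lemma Const_of_nat: "Const (of_nat k) = (of_nat k :: 'k::comm_ring_1 mpoly)"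
  by (simp add: Const_def)
lemma Const_of_int: "Const (of_int k) = (of_int k :: 'k::comm_ring_1 mpoly)"
  by (simp add: Const_def)

lemma scl_add_right: "scl c (p + q) = scl c p + scl c q"
  by (simp add: scl_def distrib_left)
lemma scl_add_left: "scl (a + b) p = scl a p + scl b p"
  by (simp add: scl_def Const_add distrib_right)
lemma scl_scl: "scl a (scl b p) = scl (a * b) p"
  by (simp add: scl_def Const_mult mult.assoc)
lemma scl_one[simp]: "scl 1 p = p"
  by (simp add: scl_def)
lemma scl_zero_left[simp]: "scl 0 p = 0"
  by (simp add: scl_def)
lemma scl_zero_right[simp]: "scl c 0 = 0"
  by (simp add: scl_def)
lemma scl_minus_right: "scl c (- p) = - scl c p"
  by (simp add: scl_def)
lemma scl_diff_right: "scl c (p - q) = scl c p - scl c q"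
  by (simp add: scl_def right_diff_distrib)
lemma scl_mult_left: "scl c p * q = scl c (p * q)"
  by (simp add: scl_def mult.assoc)
lemma scl_mult_right: "p * scl c q = scl c (p * q)"
  by (simp add: scl_def mult.left_commute)
lemma scl_sum: "scl c (sum f S) = (\<Sum>x\<in>S. scl c (f x))"
  by (simp add: scl_def sum_distrib_left)
lemma scl_of_nat: "scl (of_nat k) p = of_nat k * p"
  by (simp add: scl_def Const_of_nat)
lemma scl_of_int: "scl (of_int k) p = of_int k * p"
  by (simp add: scl_def Const_of_int)
lemma scl_neg1: "scl (-1) p = - p"
  by (simp add: scl_def Const_minus)

lemma scl_eq_0_iff:
  fixes p :: "'k::field mpoly"
  shows "scl c p = 0 \<longleftrightarrow> c = 0 \<or> p = 0"
proof
  assume h: "scl c p = 0"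
  show "c = 0 \<or> p = 0"
  proof (rule ccontr)
    assume "\<not> (c = 0 \<or> p = 0)"
    then have "c \<noteq> 0" "p \<noteq> 0" by auto
    have "scl (inverse c) (scl c p) = p" using \<open>c \<noteq> 0\<close> by (simp add: scl_scl)
    with h \<open>p \<noteq> 0\<close> show False by simp
  qed
qed auto

lemma module_scl: "module (scl :: 'k::comm_ring_1 \<Rightarrow> 'k mpoly \<Rightarrow> 'k mpoly)"
  by unfold_locales (simp_all add: scl_add_right scl_add_left scl_scl)

section \<open>Monomial decomposition\<close>

lemma pm_decomp: "(p :: 'a \<Rightarrow>\<^sub>0 'b::comm_monoid_add) = (\<Sum>m\<in>Poly_Mapping.keys p. Poly_Mapping.single m (Poly_Mapping.lookup p m))"
proof (rule poly_mapping_eqI)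
  fix k
  have "Poly_Mapping.lookup (\<Sum>m\<in>Poly_Mapping.keys p. Poly_Mapping.single m (Poly_Mapping.lookup p m)) k
      = (\<Sum>m\<in>Poly_Mapping.keys p. Poly_Mapping.lookup (Poly_Mapping.single m (Poly_Mapping.lookup p m)) k)"
    by (simp add: lookup_sum)
  also have "\<dots> = (\<Sum>m\<in>Poly_Mapping.keys p. if m = k then Poly_Mapping.lookup p m else 0)"
    by (rule sum.cong) (auto simp: lookup_single)
  also have "\<dots> = Poly_Mapping.lookup p k"
    by (simp add: in_keys_iff)
  finally show "Poly_Mapping.lookup p k = Poly_Mapping.lookup (\<Sum>m\<in>Poly_Mapping.keys p. Poly_Mapping.single m (Poly_Mapping.lookup p m)) k"
    by simp
qed

lemma single_Const: "Poly_Mapping.single m c = (Const c * Poly_Mapping.single m 1 :: 'k::comm_ring_1 mpoly)"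
  by (simp add: Const_def mult_single)

lemma single_add_mon: "Poly_Mapping.single (m1 + m2) 1 = (Poly_Mapping.single m1 1 * Poly_Mapping.single m2 1 :: 'k::comm_ring_1 mpoly)"
  by (simp add: mult_single)

lemma single_single_pow: "Poly_Mapping.single (Poly_Mapping.single x k) 1 = (Var x ^ k :: 'k::comm_ring_1 mpoly)"
proof (induction k)
  case 0 then show ?case by simp
next
  case (Suc k)
  have "Poly_Mapping.single x (Suc k) = Poly_Mapping.single x k + Poly_Mapping.single x 1"
    by (simp add: single_add[symmetric])
  then show ?case using Suc by (simp add: single_add_mon Var_def mult.commute)
qed

lemma single_sum_mon:
  assumes "finite S"
  shows "Poly_Mapping.single (\<Sum>x\<in>S. f x) 1 = (\<Prod>x\<in>S. Poly_Mapping.single (f x) 1 :: 'k::comm_ring_1 mpoly)"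
  using assms by (induction S rule: finite_induct) (simp_all add: single_add_mon)

lemma mon_prod: "Poly_Mapping.single m 1 = (\<Prod>x\<in>Poly_Mapping.keys m. Var x ^ Poly_Mapping.lookup m x :: 'k::comm_ring_1 mpoly)"
proof -
  have "Poly_Mapping.single m 1 = (Poly_Mapping.single (\<Sum>x\<in>Poly_Mapping.keys m. Poly_Mapping.single x (Poly_Mapping.lookup m x)) 1 :: 'k mpoly)"
    using pm_decomp[of m] by simp
  also have "\<dots> = (\<Prod>x\<in>Poly_Mapping.keys m. Var x ^ Poly_Mapping.lookup m x)"
    by (simp add: single_sum_mon single_single_pow)
  finally show ?thesis .
qed

lemma finite_vars[simp]: "finite (vars p)"
  by (simp add: vars_def)

lemma mpoly_induct_vars[consumes 1, case_names Const Var add mult]: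
  fixes p :: "'k::comm_ring_1 mpoly"
  assumes "vars p \<subseteq> X"
    and C: "\<And>c. P (Const c)"
    and V: "\<And>x. x \<in> X \<Longrightarrow> P (Var x)"
    and A: "\<And>p q. P p \<Longrightarrow> P q \<Longrightarrow> P (p + q)"
    and M: "\<And>p q. P p \<Longrightarrow> P q \<Longrightarrow> P (p * q)"
  shows "P p"
proof -
  have P0: "P 0" using C[of 0] by simp
  have P1: "P 1" using C[of 1] by simp
  have Ppow: "P (Var x ^ k)" if "x \<in> X" for x k
    by (induction k) (simp_all add: P1 M V that)
  have Pprod: "finite S \<Longrightarrow> (\<forall>x\<in>S. P (f x)) \<Longrightarrow> P (\<Prod>x\<in>S. f x)" for S and f :: "var \<Rightarrow> 'k mpoly"
    by (induction S rule: finite_induct) (simp_all add: P1 M)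
  have Psum: "finite S \<Longrightarrow> (\<forall>x\<in>S. P (f x)) \<Longrightarrow> P (\<Sum>x\<in>S. f x)" for S and f :: "(var \<Rightarrow>\<^sub>0 nat) \<Rightarrow> 'k mpoly"
    by (induction S rule: finite_induct) (simp_all add: P0 A)
  have "P (\<Sum>m\<in>Poly_Mapping.keys p. Poly_Mapping.single m (Poly_Mapping.lookup p m))"
  proof (rule Psum)
    show "\<forall>m\<in>Poly_Mapping.keys p. P (Poly_Mapping.single m (Poly_Mapping.lookup p m))"
    proof
      fix m assume m: "m \<in> Poly_Mapping.keys p"
      have "Poly_Mapping.keys m \<subseteq> X" using m assms(1) by (auto simp: vars_def)
      then have "P (\<Prod>x\<in>Poly_Mapping.keys m. Var x ^ Poly_Mapping.lookup m x)"
        by (intro Pprod) (auto intro: Ppow)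
      then show "P (Poly_Mapping.single m (Poly_Mapping.lookup p m))"
        by (subst single_Const) (simp add: mon_prod[symmetric] M C)
    qed
  qed simp
  then show ?thesis using pm_decomp[of p] by simp
qed

lemma mpoly_induct[case_names Const Var add mult]:
  fixes p :: "'k::comm_ring_1 mpoly"
  assumes "\<And>c. P (Const c)"
    and "\<And>x. P (Var x)"
    and "\<And>p q. P p \<Longrightarrow> P q \<Longrightarrow> P (p + q)"
    and "\<And>p q. P p \<Longrightarrow> P q \<Longrightarrow> P (p * q)"
  shows "P p"
  using mpoly_induct_vars[of p UNIV P] assms by blast

lemma keys_add_nat: "Poly_Mapping.keys ((m1::var \<Rightarrow>\<^sub>0 nat) + m2) = Poly_Mapping.keys m1 \<union> Poly_Mapping.keys m2"
  by (auto simp: in_keys_iff lookup_add)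

lemma vars_add: "vars (p + q) \<subseteq> vars p \<union> vars q"
  using keys_add[of p q] by (auto simp: vars_def)

lemma vars_mult: "vars (p * q) \<subseteq> vars p \<union> vars q"
proof
  fix x assume "x \<in> vars (p * q)"
  then obtain m where m: "m \<in> Poly_Mapping.keys (p * q)" "x \<in> Poly_Mapping.keys m" by (auto simp: vars_def)
  then obtain m1 m2 where "m = m1 + m2" "m1 \<in> Poly_Mapping.keys p" "m2 \<in> Poly_Mapping.keys q"
    using keys_mult[of p q] by blast
  then show "x \<in> vars p \<union> vars q" using m(2) by (auto simp: vars_def keys_add_nat)
qed

lemma vars_Const[simp]: "vars (Const c) = {}"
  by (simp add: vars_def Const_def)

lemma vars_Var: "vars (Var x :: 'k::comm_ring_1 mpoly) = {x}"
  by (simp add: vars_def Var_def)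

lemma vars_0[simp]: "vars 0 = {}"
  by (simp add: vars_def)

lemma vars_uminus: "vars (- p) = vars p"
  by (simp add: vars_def keys_minus)




section \<open>Partial derivatives\<close>

abbreviation "dl x \<equiv> Poly_Mapping.single x (1::nat)"

lemma pdv_superset:
  fixes p :: "'k::comm_ring_1 mpoly"
  assumes "finite K" "Poly_Mapping.keys p \<subseteq> K"
  shows "pdv x p = (\<Sum>m\<in>K. Poly_Mapping.single (m - dl x) (of_nat (Poly_Mapping.lookup m x) * Poly_Mapping.lookup p m))"
  unfolding pdv_def
  by (rule sum.mono_neutral_left) (auto simp: assms in_keys_iff)

lemma pdv_add: "pdv x (p + q) = pdv x p + (pdv x q :: 'k::comm_ring_1 mpoly)"
proof -
  let ?K = "Poly_Mapping.keys p \<union> Poly_Mapping.keys q"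
  have "pdv x (p + q) = (\<Sum>m\<in>?K. Poly_Mapping.single (m - dl x) (of_nat (Poly_Mapping.lookup m x) * Poly_Mapping.lookup (p + q) m))"
    using keys_add[of p q] by (intro pdv_superset) auto
  also have "\<dots> = (\<Sum>m\<in>?K. Poly_Mapping.single (m - dl x) (of_nat (Poly_Mapping.lookup m x) * Poly_Mapping.lookup p m))
       + (\<Sum>m\<in>?K. Poly_Mapping.single (m - dl x) (of_nat (Poly_Mapping.lookup m x) * Poly_Mapping.lookup q m))"
    by (simp add: lookup_add distrib_left single_add sum.distrib)
  also have "\<dots> = pdv x p + pdv x q"
    by (subst (1 2) pdv_superset[symmetric]) auto
  finally show ?thesis .
qed

lemma pdv_0[simp]: "pdv x 0 = 0"
  by (simp add: pdv_def)

lemma pdv_sum: "pdv x (sum f S) = (\<Sum>s\<in>S. pdv x (f s))"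
  by (induction S rule: infinite_finite_induct) (simp_all add: pdv_add)

lemma pdv_single: "pdv x (Poly_Mapping.single m c :: 'k::comm_ring_1 mpoly) = Poly_Mapping.single (m - dl x) (of_nat (Poly_Mapping.lookup m x) * c)"
  by (cases "c = 0") (simp_all add: pdv_def)

lemma pdv_mon_leibniz:
  "pdv x (Poly_Mapping.single m a * Poly_Mapping.single m' b :: 'k::comm_ring_1 mpoly)
   = Poly_Mapping.single m a * pdv x (Poly_Mapping.single m' b) + pdv x (Poly_Mapping.single m a) * Poly_Mapping.single m' b"
proof -
  have e1: "Poly_Mapping.single (m + (m' - dl x)) (a * (of_nat (Poly_Mapping.lookup m' x) * b))
     = (Poly_Mapping.single (m + m' - dl x) (of_nat (Poly_Mapping.lookup m' x) * (a * b)) :: 'k mpoly)"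
  proof (cases "Poly_Mapping.lookup m' x = 0")
    case False
    have "m + (m' - dl x) = m + m' - dl x"
      by (rule poly_mapping_eqI) (use False in \<open>auto simp: lookup_add lookup_minus lookup_single when_def\<close>)
    then show ?thesis by (simp add: ac_simps)
  qed simp
  have e2: "Poly_Mapping.single (m - dl x + m') (of_nat (Poly_Mapping.lookup m x) * a * b)
     = (Poly_Mapping.single (m + m' - dl x) (of_nat (Poly_Mapping.lookup m x) * (a * b)) :: 'k mpoly)"
  proof (cases "Poly_Mapping.lookup m x = 0")
    case False
    have "m - dl x + m' = m + m' - dl x"
      by (rule poly_mapping_eqI) (use False in \<open>auto simp: lookup_add lookup_minus lookup_single when_def\<close>)
    then show ?thesis by (simp add: ac_simps)
  qed simp
  show ?thesis
    apply (simp only: mult_single pdv_single e1 e2)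
    apply (simp add: single_add[symmetric] lookup_add algebra_simps)
    done
qed

lemma mult_decomp: "(p :: 'k::comm_ring_1 mpoly) * q = (\<Sum>m\<in>Poly_Mapping.keys p. \<Sum>m'\<in>Poly_Mapping.keys q.
    Poly_Mapping.single m (Poly_Mapping.lookup p m) * Poly_Mapping.single m' (Poly_Mapping.lookup q m'))"
  apply (subst (1) pm_decomp[of p])
  apply (subst (1) pm_decomp[of q])
  by (simp add: sum_distrib_left sum_distrib_right) (rule sum.swap)

lemma pdv_mult: "pdv x (p * q) = p * pdv x q + pdv x p * (q :: 'k::comm_ring_1 mpoly)"
proof -
  have "pdv x (p * q) = (\<Sum>m\<in>Poly_Mapping.keys p. \<Sum>m'\<in>Poly_Mapping.keys q.
     Poly_Mapping.single m (Poly_Mapping.lookup p m) * pdv x (Poly_Mapping.single m' (Poly_Mapping.lookup q m'))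
     + pdv x (Poly_Mapping.single m (Poly_Mapping.lookup p m)) * Poly_Mapping.single m' (Poly_Mapping.lookup q m'))"
    by (subst mult_decomp) (simp add: pdv_sum pdv_mon_leibniz)
  also have "\<dots> = (\<Sum>m\<in>Poly_Mapping.keys p. Poly_Mapping.single m (Poly_Mapping.lookup p m)) * pdv x (\<Sum>m'\<in>Poly_Mapping.keys q. Poly_Mapping.single m' (Poly_Mapping.lookup q m'))
     + pdv x (\<Sum>m\<in>Poly_Mapping.keys p. Poly_Mapping.single m (Poly_Mapping.lookup p m)) * (\<Sum>m'\<in>Poly_Mapping.keys q. Poly_Mapping.single m' (Poly_Mapping.lookup q m'))"
    by (simp add: sum.distrib pdv_sum sum_distrib_left sum_distrib_right sum.swap[of _ "Poly_Mapping.keys q"])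
  also have "\<dots> = p * pdv x q + pdv x p * q"
    using pm_decomp[of p, symmetric] pm_decomp[of q, symmetric] by simp
  finally show ?thesis .
qed

lemma pdv_Const[simp]: "pdv x (Const c :: 'k::comm_ring_1 mpoly) = 0"
  by (simp add: Const_def pdv_single)

lemma pdv_Var: "pdv x (Var y :: 'k::comm_ring_1 mpoly) = (if x = y then 1 else 0)"
  by (auto simp: Var_def pdv_single lookup_single)

lemma pdv_notin: "x \<notin> vars p \<Longrightarrow> pdv x p = 0"
  unfolding pdv_def
  by (rule sum.neutral) (auto simp: vars_def in_keys_iff)

section \<open>Derivations\<close>

definition is_der :: "('k::comm_ring_1 mpoly \<Rightarrow> 'k mpoly) \<Rightarrow> bool" where
  "is_der D \<longleftrightarrow> (\<forall>p q. D (p + q) = D p + D q) \<and> (\<forall>p q. D (p * q) = p * D q + D p * q) \<and> (\<forall>c. D (Const c) = 0)"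

lemma der_superset:
  assumes "finite S" "vars p \<subseteq> S"
  shows "der g p = (\<Sum>x\<in>S. g x * pdv x p)"
  unfolding der_def
  by (rule sum.mono_neutral_left) (use assms in \<open>auto simp: pdv_notin\<close>)

lemma is_der_der: "is_der (der g)"
  unfolding is_der_def
proof (intro conjI allI)
  fix p q :: "'a mpoly"
  let ?S = "vars p \<union> vars q"
  have s1: "der g (p + q) = (\<Sum>x\<in>?S. g x * pdv x (p + q))"
    using vars_add[of p q] by (intro der_superset) auto
  have s2: "der g (p * q) = (\<Sum>x\<in>?S. g x * pdv x (p * q))"
    using vars_mult[of p q] by (intro der_superset) auto
  have sp: "der g p = (\<Sum>x\<in>?S. g x * pdv x p)" by (intro der_superset) auto
  have sq: "der g q = (\<Sum>x\<in>?S. g x * pdv x q)" by (intro der_superset) auto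
  show "der g (p + q) = der g p + der g q"
    by (simp add: s1 sp sq pdv_add distrib_left sum.distrib)
  show "der g (p * q) = p * der g q + der g p * q"
    by (simp add: s2 sp sq pdv_mult distrib_left sum.distrib sum_distrib_left sum_distrib_right ac_simps)
  fix c
  show "der g (Const c) = 0" by (simp add: der_def)
qed

lemma der_Var[simp]: "der g (Var x :: 'k::comm_ring_1 mpoly) = g x"
  by (simp add: der_def vars_Var pdv_Var)

context
  fixes D :: "'k::comm_ring_1 mpoly \<Rightarrow> 'k mpoly"
  assumes D: "is_der D"
begin

lemma der_add: "D (p + q) = D p + D q" using D by (simp add: is_der_def)
lemma der_mult: "D (p * q) = p * D q + D p * q" using D by (simp add: is_der_def)
lemma der_Const[simp]: "D (Const c) = 0" using D by (simp add: is_der_def)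
lemma der_0[simp]: "D 0 = 0" using der_Const[of 0] by simp
lemma der_1[simp]: "D 1 = 0" using der_Const[of 1] by simp
lemma der_uminus: "D (- p) = - D p"
  using der_add[of p "- p"] by (simp add: eq_neg_iff_add_eq_0 add.commute)
lemma der_diff: "D (p - q) = D p - D q"
  using der_add[of p "- q"] by (simp add: der_uminus)
lemma der_scl: "D (scl c p) = scl c (D p)"
  by (simp add: scl_def der_mult)
lemma der_of_nat_mult: "D (of_nat k * p) = of_nat k * D p"
  by (simp add: der_mult Const_of_nat[symmetric])
lemma der_of_int_mult: "D (of_int k * p) = of_int k * D p"
  by (simp add: der_mult Const_of_int[symmetric])
lemma der_sum: "D (sum f S) = (\<Sum>s\<in>S. D (f s))"
  by (induction S rule: infinite_finite_induct) (simp_all add: der_add)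
lemma der_pow: "D (p ^ Suc k) = of_nat (Suc k) * p ^ k * D p"
proof (induction k)
  case 0 then show ?case by simp
next
  case (Suc k)
  have "D (p ^ Suc (Suc k)) = D (p * p ^ Suc k)" by simp
  also have "\<dots> = p * D (p ^ Suc k) + D p * p ^ Suc k" by (rule der_mult)
  also have "\<dots> = of_nat (Suc (Suc k)) * p ^ Suc k * D p"
    by (simp only: Suc) (simp add: algebra_simps)
  finally show ?case .
qed
lemma der_pow': "D (p ^ k) = of_nat k * p ^ (k - 1) * D p"
proof (cases k)
  case (Suc k')
  then show ?thesis using der_pow[of p k'] by simp
qed simp
lemma der_funpow_scl: "(D ^^ k) (scl c p) = scl c ((D ^^ k) p)"
  by (induction k) (simp_all add: der_scl)
lemma der_funpow_add: "(D ^^ k) (p + q) = (D ^^ k) p + (D ^^ k) q"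
  by (induction k) (simp_all add: der_add)
lemma der_funpow_0[simp]: "(D ^^ k) 0 = 0"
  by (induction k) simp_all
lemma der_funpow_uminus: "(D ^^ k) (- p) = - (D ^^ k) p"
  by (induction k) (simp_all add: der_uminus)
lemma der_funpow_sum: "(D ^^ k) (sum f S) = (\<Sum>s\<in>S. (D ^^ k) (f s))"
  by (induction S rule: infinite_finite_induct) (simp_all add: der_funpow_add)

end

lemma der_unique:
  assumes "is_der D" "is_der E" "\<And>x. D (Var x) = E (Var x)"
  shows "D p = E p"
proof (induction p rule: mpoly_induct)
  case (Const c)
  then show ?case using der_Const[OF assms(1)] der_Const[OF assms(2)] by simp
next
  case (Var x)
  then show ?case by (rule assms(3))
next
  case (add p q)
  then show ?case by (simp add: der_add[OF assms(1)] der_add[OF assms(2)])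
next
  case (mult p q)
  then show ?case by (simp add: der_mult[OF assms(1)] der_mult[OF assms(2)])
qed

lemma is_der_comm:
  assumes "is_der D" "is_der E"
  shows "is_der (\<lambda>p. D (E p) - E (D p))"
  unfolding is_der_def
  by (simp add: der_add[OF assms(1)] der_add[OF assms(2)] der_mult[OF assms(1)] der_mult[OF assms(2)]
      der_Const[OF assms(1)] der_Const[OF assms(2)] der_0[OF assms(1)] der_0[OF assms(2)] algebra_simps)

lemma is_der_add:
  assumes "is_der D" "is_der E"
  shows "is_der (\<lambda>p. D p + E p)"
  unfolding is_der_def
  by (simp add: der_add[OF assms(1)] der_add[OF assms(2)] der_mult[OF assms(1)] der_mult[OF assms(2)]
      der_Const[OF assms(1)] der_Const[OF assms(2)] der_0[OF assms(1)] der_0[OF assms(2)] algebra_simps)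

lemma is_der_scl:
  assumes "is_der D"
  shows "is_der (\<lambda>p. scl c (D p))"
  unfolding is_der_def
  by (simp add: der_add[OF assms(1)] der_mult[OF assms(1)] der_Const[OF assms(1)] scl_add_right
      scl_mult_left scl_mult_right)

lemma is_der_zero: "is_der (\<lambda>p. 0)"
  by (simp add: is_der_def)

lemma der_aa: "der g (aa n i j) = (if i + j \<le> n then g (A i j) else 0)"
  by (simp add: aa_def der_Const[OF is_der_der, of g 0, simplified])




lemma is_der_ops:
  "is_der (D1 n)" "is_der (D2 n)" "is_der (D3 n)" "is_der (Dh1 n)" "is_der (Dh2 n)" "is_der (Dh3 n)"
  "is_der (E1 n)" "is_der (E2 n)"
  by (simp_all add: D1_def D2_def D3_def Dh1_def Dh2_def Dh3_def E1_def E2_def is_der_der)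

lemma ops_Var:
  "D1 n (Var x) = gD1 n x" "D2 n (Var x) = gD2 n x" "D3 n (Var x) = gD3 n x"
  "Dh1 n (Var x) = gH1 n x" "Dh2 n (Var x) = gH2 n x" "Dh3 n (Var x) = gH3 n x"
  "E1 n (Var x) = gE1 n x" "E2 n (Var x) = gE2 n x"
  by (simp_all add: D1_def D2_def D3_def Dh1_def Dh2_def Dh3_def E1_def E2_def)

lemma ops_aa:
  "D1 n (aa n i j) = (if i + j \<le> n then gD1 n (A i j) else 0)"
  "D2 n (aa n i j) = (if i + j \<le> n then gD2 n (A i j) else 0)"
  "D3 n (aa n i j) = (if i + j \<le> n then gD3 n (A i j) else 0)"
  "Dh1 n (aa n i j) = (if i + j \<le> n then gH1 n (A i j) else 0)"
  "Dh2 n (aa n i j) = (if i + j \<le> n then gH2 n (A i j) else 0)"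
  "Dh3 n (aa n i j) = (if i + j \<le> n then gH3 n (A i j) else 0)"
  "E1 n (aa n i j) = (if i + j \<le> n then gE1 n (A i j) else 0)"
  "E2 n (aa n i j) = (if i + j \<le> n then gE2 n (A i j) else 0)"
  by (simp_all add: D1_def D2_def D3_def Dh1_def Dh2_def Dh3_def E1_def E2_def der_aa)

lemma der_of_nat[simp]: "is_der D \<Longrightarrow> D (of_nat k) = 0"
  using der_Const[of D "of_nat k"] by (simp add: Const_of_nat)
lemma der_of_int[simp]: "is_der D \<Longrightarrow> D (of_int k) = 0"
  using der_Const[of D "of_int k"] by (simp add: Const_of_int)
lemma der_numeral[simp]: "is_der D \<Longrightarrow> D (numeral k) = 0"
  using der_of_nat[of D "numeral k"] by simp

lemmas ops_simps = ops_Var ops_aa is_der_ops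
  der_mult[OF is_der_ops(1)] der_mult[OF is_der_ops(2)] der_mult[OF is_der_ops(3)] der_mult[OF is_der_ops(4)]
  der_mult[OF is_der_ops(5)] der_mult[OF is_der_ops(6)] der_mult[OF is_der_ops(7)] der_mult[OF is_der_ops(8)]
  der_add[OF is_der_ops(1)] der_add[OF is_der_ops(2)] der_add[OF is_der_ops(3)] der_add[OF is_der_ops(4)]
  der_add[OF is_der_ops(5)] der_add[OF is_der_ops(6)] der_add[OF is_der_ops(7)] der_add[OF is_der_ops(8)]
  der_diff[OF is_der_ops(1)] der_diff[OF is_der_ops(2)] der_diff[OF is_der_ops(3)] der_diff[OF is_der_ops(4)]
  der_diff[OF is_der_ops(5)] der_diff[OF is_der_ops(6)] der_diff[OF is_der_ops(7)] der_diff[OF is_der_ops(8)] der_of_nat_mult[OF is_der_ops(1)] der_of_nat_mult[OF is_der_ops(2)]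
  der_of_nat_mult[OF is_der_ops(3)] der_of_nat_mult[OF is_der_ops(4)] der_of_nat_mult[OF is_der_ops(5)]
  der_of_nat_mult[OF is_der_ops(6)] der_of_nat_mult[OF is_der_ops(7)] der_of_nat_mult[OF is_der_ops(8)]
  der_of_int_mult[OF is_der_ops(1)] der_of_int_mult[OF is_der_ops(2)]
  der_of_int_mult[OF is_der_ops(3)] der_of_int_mult[OF is_der_ops(4)] der_of_int_mult[OF is_der_ops(5)]
  der_of_int_mult[OF is_der_ops(6)] der_of_int_mult[OF is_der_ops(7)] der_of_int_mult[OF is_der_ops(8)]
  der_0[OF is_der_ops(1)] der_0[OF is_der_ops(2)] der_0[OF is_der_ops(3)] der_0[OF is_der_ops(4)]
  der_0[OF is_der_ops(5)] der_0[OF is_der_ops(6)] der_0[OF is_der_ops(7)] der_0[OF is_der_ops(8)]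
  der_uminus[OF is_der_ops(1)] der_uminus[OF is_der_ops(2)] der_uminus[OF is_der_ops(3)] der_uminus[OF is_der_ops(4)]
  der_uminus[OF is_der_ops(5)] der_uminus[OF is_der_ops(6)] der_uminus[OF is_der_ops(7)] der_uminus[OF is_der_ops(8)]

lemma scl_neg_numeral[simp]: "scl (- numeral k) p = - (numeral k * p)"
  by (simp add: scl_def Const_minus) (simp add: Const_def)

lemma is_der_neg: "is_der D \<Longrightarrow> is_der (\<lambda>p. - D p)"
  using is_der_scl[of D "-1"] by (simp add: scl_neg1)

lemma comm_rel:
  assumes "is_der X" "is_der Y" "is_der R" "\<And>x. X (Y (Var x)) - Y (X (Var x)) = R (Var x)"
  shows "X (Y p) = Y (X p) + R p"
proof -
  have "(\<lambda>p. X (Y p) - Y (X p)) p = R p"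
    by (rule der_unique[OF is_der_comm[OF assms(1,2)] assms(3)]) (simp add: assms(4))
  then show ?thesis by (simp add: algebra_simps)
qed

lemma C1: "Dh3 n (Dh2 n p) = Dh2 n (Dh3 n p)"
proof -
  have "Dh3 n (Dh2 n p) = Dh2 n (Dh3 n p) + (\<lambda>p. 0) p"
  proof (rule comm_rel[OF is_der_ops(6) is_der_ops(5) is_der_zero])
    fix x show "Dh3 n (Dh2 n (Var x)) - Dh2 n (Dh3 n (Var x)) = 0"
      apply (cases x)
      subgoal for i j by (cases "i = 0"; cases "j = 0"; cases "n = i + j"; simp add: ops_simps; auto simp: algebra_simps)
      subgoal for k by (simp add: ops_simps)
      done
  qed
  then show ?thesis by simp
qed

lemma C2: "Dh1 n (Dh2 n p) = Dh2 n (Dh1 n p) + - Dh3 n p"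
proof -
  have "Dh1 n (Dh2 n p) = Dh2 n (Dh1 n p) + (\<lambda>p. - Dh3 n p) p"
  proof (rule comm_rel[OF is_der_ops(4) is_der_ops(5) is_der_neg[OF is_der_ops(6)]])
    fix x show "Dh1 n (Dh2 n (Var x)) - Dh2 n (Dh1 n (Var x)) = (\<lambda>p. - Dh3 n p) (Var x)"
      apply (cases x)
      subgoal for i j by (cases "i = 0"; cases "j = 0"; cases "n = i + j"; simp add: ops_simps; auto simp: algebra_simps)
      subgoal for k by (simp add: ops_simps)
      done
  qed
  then show ?thesis by simp
qed

lemma C3: "Dh1 n (Dh3 n p) = Dh3 n (Dh1 n p)"
proof -
  have "Dh1 n (Dh3 n p) = Dh3 n (Dh1 n p) + (\<lambda>p. 0) p"
  proof (rule comm_rel[OF is_der_ops(4) is_der_ops(6) is_der_zero])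
    fix x show "Dh1 n (Dh3 n (Var x)) - Dh3 n (Dh1 n (Var x)) = (\<lambda>p. 0) (Var x)"
      apply (cases x)
      subgoal for i j by (cases "i = 0"; cases "j = 0"; cases "n = i + j"; simp add: ops_simps; auto simp: algebra_simps)
      subgoal for k by (simp add: ops_simps)
      done
  qed
  then show ?thesis by simp
qed

lemma C4: "D1 n (Dh2 n p) = Dh2 n (D1 n p)"
proof -
  have "D1 n (Dh2 n p) = Dh2 n (D1 n p) + (\<lambda>p. 0) p"
  proof (rule comm_rel[OF is_der_ops(1) is_der_ops(5) is_der_zero])
    fix x show "D1 n (Dh2 n (Var x)) - Dh2 n (D1 n (Var x)) = (\<lambda>p. 0) (Var x)"
      apply (cases x)
      subgoal for i j by (cases "i = 0"; cases "j = 0"; cases "n = i + j"; simp add: ops_simps; auto simp: algebra_simps)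
      subgoal for k by (simp add: ops_simps)
      done
  qed
  then show ?thesis by simp
qed

lemma C5: "D1 n (Dh3 n p) = Dh3 n (D1 n p) + - Dh2 n p"
proof -
  have "D1 n (Dh3 n p) = Dh3 n (D1 n p) + (\<lambda>p. - Dh2 n p) p"
  proof (rule comm_rel[OF is_der_ops(1) is_der_ops(6) is_der_neg[OF is_der_ops(5)]])
    fix x show "D1 n (Dh3 n (Var x)) - Dh3 n (D1 n (Var x)) = (\<lambda>p. - Dh2 n p) (Var x)"
      apply (cases x)
      subgoal for i j by (cases "i = 0"; cases "j = 0"; cases "n = i + j"; simp add: ops_simps; auto simp: algebra_simps)
      subgoal for k by (simp add: ops_simps)
      done
  qed
  then show ?thesis by simp
qed

lemma C6: "D2 n (Dh3 n p) = Dh3 n (D2 n p) + Dh1 n p"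
proof -
  have "D2 n (Dh3 n p) = Dh3 n (D2 n p) + (Dh1 n) p"
  proof (rule comm_rel[OF is_der_ops(2) is_der_ops(6) is_der_ops(4)])
    fix x show "D2 n (Dh3 n (Var x)) - Dh3 n (D2 n (Var x)) = (Dh1 n) (Var x)"
      apply (cases x)
      subgoal for i j by (cases "i = 0"; cases "j = 0"; cases "n = i + j"; simp add: ops_simps; auto simp: algebra_simps)
      subgoal for k by (simp add: ops_simps)
      done
  qed
  then show ?thesis by simp
qed

lemma C7: "D2 n (Dh2 n p) = Dh2 n (D2 n p) + E2 n p"
proof -
  have "D2 n (Dh2 n p) = Dh2 n (D2 n p) + (E2 n) p"
  proof (rule comm_rel[OF is_der_ops(2) is_der_ops(5) is_der_ops(8)])
    fix x show "D2 n (Dh2 n (Var x)) - Dh2 n (D2 n (Var x)) = (E2 n) (Var x)"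
      apply (cases x)
      subgoal for i j by (cases "i = 0"; cases "j = 0"; cases "n = i + j"; simp add: ops_simps; auto simp: algebra_simps)
      subgoal for k by (simp add: ops_simps)
      done
  qed
  then show ?thesis by simp
qed

lemma C8: "D3 n (Dh3 n p) = Dh3 n (D3 n p) + (E1 n p + E2 n p)"
proof -
  have "D3 n (Dh3 n p) = Dh3 n (D3 n p) + (\<lambda>p. E1 n p + E2 n p) p"
  proof (rule comm_rel[OF is_der_ops(3) is_der_ops(6) is_der_add[OF is_der_ops(7) is_der_ops(8)]])
    fix x show "D3 n (Dh3 n (Var x)) - Dh3 n (D3 n (Var x)) = (\<lambda>p. E1 n p + E2 n p) (Var x)"
      apply (cases x)
      subgoal for i j by (cases "i = 0"; cases "j = 0"; cases "n = i + j"; simp add: ops_simps; auto simp: algebra_simps)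
      subgoal for k by (simp add: ops_simps)
      done
  qed
  then show ?thesis by simp
qed

lemma C9: "D3 n (Dh2 n p) = Dh2 n (D3 n p) + D1 n p"
proof -
  have "D3 n (Dh2 n p) = Dh2 n (D3 n p) + (D1 n) p"
  proof (rule comm_rel[OF is_der_ops(3) is_der_ops(5) is_der_ops(1)])
    fix x show "D3 n (Dh2 n (Var x)) - Dh2 n (D3 n (Var x)) = (D1 n) (Var x)"
      apply (cases x)
      subgoal for i j by (cases "i = 0"; cases "j = 0"; cases "n = i + j"; simp add: ops_simps; auto simp: algebra_simps)
      subgoal for k by (simp add: ops_simps)
      done
  qed
  then show ?thesis by simp
qed

lemma C10: "E1 n (Dh2 n p) = Dh2 n (E1 n p) + Dh2 n p"
proof -
  have "E1 n (Dh2 n p) = Dh2 n (E1 n p) + (Dh2 n) p"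
  proof (rule comm_rel[OF is_der_ops(7) is_der_ops(5) is_der_ops(5)])
    fix x show "E1 n (Dh2 n (Var x)) - Dh2 n (E1 n (Var x)) = (Dh2 n) (Var x)"
      apply (cases x)
      subgoal for i j by (cases "i = 0"; cases "j = 0"; cases "n = i + j"; simp add: ops_simps; auto simp: algebra_simps)
      subgoal for k by (simp add: ops_simps)
      done
  qed
  then show ?thesis by simp
qed

lemma C11: "E1 n (Dh3 n p) = Dh3 n (E1 n p) + - Dh3 n p"
proof -
  have "E1 n (Dh3 n p) = Dh3 n (E1 n p) + (\<lambda>p. - Dh3 n p) p"
  proof (rule comm_rel[OF is_der_ops(7) is_der_ops(6) is_der_neg[OF is_der_ops(6)]])
    fix x show "E1 n (Dh3 n (Var x)) - Dh3 n (E1 n (Var x)) = (\<lambda>p. - Dh3 n p) (Var x)"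
      apply (cases x)
      subgoal for i j by (cases "i = 0"; cases "j = 0"; cases "n = i + j"; simp add: ops_simps; auto simp: algebra_simps)
      subgoal for k by (simp add: ops_simps)
      done
  qed
  then show ?thesis by simp
qed

lemma C12: "E2 n (Dh2 n p) = Dh2 n (E2 n p) + scl (-2) (Dh2 n p)"
proof -
  have "E2 n (Dh2 n p) = Dh2 n (E2 n p) + (\<lambda>p. scl (-2) (Dh2 n p)) p"
  proof (rule comm_rel[OF is_der_ops(8) is_der_ops(5) is_der_scl[OF is_der_ops(5)]])
    fix x show "E2 n (Dh2 n (Var x)) - Dh2 n (E2 n (Var x)) = (\<lambda>p. scl (-2) (Dh2 n p)) (Var x)"
      apply (cases x)
      subgoal for i j by (cases "i = 0"; cases "j = 0"; cases "n = i + j"; simp add: ops_simps; auto simp: algebra_simps)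
      subgoal for k by (simp add: ops_simps)
      done
  qed
  then show ?thesis by simp
qed

lemma C13: "E2 n (Dh3 n p) = Dh3 n (E2 n p) + - Dh3 n p"
proof -
  have "E2 n (Dh3 n p) = Dh3 n (E2 n p) + (\<lambda>p. - Dh3 n p) p"
  proof (rule comm_rel[OF is_der_ops(8) is_der_ops(6) is_der_neg[OF is_der_ops(6)]])
    fix x show "E2 n (Dh3 n (Var x)) - Dh3 n (E2 n (Var x)) = (\<lambda>p. - Dh3 n p) (Var x)"
      apply (cases x)
      subgoal for i j by (cases "i = 0"; cases "j = 0"; cases "n = i + j"; simp add: ops_simps; auto simp: algebra_simps)
      subgoal for k by (simp add: ops_simps)
      done
  qed
  then show ?thesis by simp
qed

lemma C14: "D1 n (Dh1 n p) = Dh1 n (D1 n p) + E1 n p"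
proof -
  have "D1 n (Dh1 n p) = Dh1 n (D1 n p) + (E1 n) p"
  proof (rule comm_rel[OF is_der_ops(1) is_der_ops(4) is_der_ops(7)])
    fix x show "D1 n (Dh1 n (Var x)) - Dh1 n (D1 n (Var x)) = (E1 n) (Var x)"
      apply (cases x)
      subgoal for i j by (cases "i = 0"; cases "j = 0"; cases "n = i + j"; simp add: ops_simps; auto simp: algebra_simps)
      subgoal for k by (simp add: ops_simps)
      done
  qed
  then show ?thesis by simp
qed

lemma C15: "D1 n (D2 n p) = D2 n (D1 n p) + D3 n p"
proof -
  have "D1 n (D2 n p) = D2 n (D1 n p) + (D3 n) p"
  proof (rule comm_rel[OF is_der_ops(1) is_der_ops(2) is_der_ops(3)])
    fix x show "D1 n (D2 n (Var x)) - D2 n (D1 n (Var x)) = (D3 n) (Var x)"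
      apply (cases x)
      subgoal for i j by (cases "i = 0"; cases "j = 0"; cases "n = i + j"; simp add: ops_simps; auto simp: algebra_simps)
      subgoal for k by (simp add: ops_simps)
      done
  qed
  then show ?thesis by simp
qed

lemma C16: "Dh1 n (D3 n p) = D3 n (Dh1 n p) + D2 n p"
proof -
  have "Dh1 n (D3 n p) = D3 n (Dh1 n p) + (D2 n) p"
  proof (rule comm_rel[OF is_der_ops(4) is_der_ops(3) is_der_ops(2)])
    fix x show "Dh1 n (D3 n (Var x)) - D3 n (Dh1 n (Var x)) = (D2 n) (Var x)"
      apply (cases x)
      subgoal for i j by (cases "i = 0"; cases "j = 0"; cases "n = i + j"; simp add: ops_simps; auto simp: algebra_simps)
      subgoal for k by (simp add: ops_simps)
      done
  qed
  then show ?thesis by simp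
qed




lemma funpow_Suc_app: "(f ^^ Suc k) x = f ((f ^^ k) x)"
  by simp

lemma comm_funpow0:
  assumes "\<And>p. X (Y p) = Y (X p)"
  shows "X ((Y ^^ k) p) = (Y ^^ k) (X p)"
  by (induction k) (simp_all add: assms)

lemma comm_pow:
  fixes X Y Z :: "'k::comm_ring_1 mpoly \<Rightarrow> 'k mpoly"
  assumes XY: "\<And>p. X (Y p) = Y (X p) + Z p" and ZY: "\<And>p. Z (Y p) = Y (Z p)" and Y: "is_der Y"
  shows "X ((Y ^^ Suc k) p) = (Y ^^ Suc k) (X p) + scl (of_nat (Suc k)) ((Y ^^ k) (Z p))"
proof (induction k)
  case 0
  then show ?case by (simp add: XY)
next
  case (Suc k)
  have "X ((Y ^^ Suc (Suc k)) p) = Y (X ((Y ^^ Suc k) p)) + Z ((Y ^^ Suc k) p)"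
    by (simp only: funpow_Suc_app XY)
  also have "Z ((Y ^^ Suc k) p) = (Y ^^ Suc k) (Z p)"
    by (rule comm_funpow0) (rule ZY)
  also have "Y (X ((Y ^^ Suc k) p)) = (Y ^^ Suc (Suc k)) (X p) + scl (of_nat (Suc k)) ((Y ^^ Suc k) (Z p))"
    using Suc by (simp add: der_add[OF Y] der_scl[OF Y])
  finally show ?case
    using scl_add_left[of "of_nat (Suc k)" 1 "(Y ^^ Suc k) (Z p)"] by (simp add: add.assoc del: funpow.simps)
qed

lemma comm_pow_eig:
  fixes X Y :: "'k::comm_ring_1 mpoly \<Rightarrow> 'k mpoly"
  assumes XY: "\<And>p. X (Y p) = Y (X p) + scl e (Y p)" and Y: "is_der Y" and q: "X q = scl c q"
  shows "X ((Y ^^ k) q) = scl (c + of_nat k * e) ((Y ^^ k) q)"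
proof (induction k)
  case 0
  then show ?case by (simp add: q)
next
  case (Suc k)
  have "X ((Y ^^ Suc k) q) = Y (X ((Y ^^ k) q)) + scl e ((Y ^^ Suc k) q)"
    by (simp add: XY)
  also have "\<dots> = scl (c + of_nat k * e) ((Y ^^ Suc k) q) + scl e ((Y ^^ Suc k) q)"
    by (simp add: Suc der_scl[OF Y])
  finally show ?case
    by (simp add: scl_add_left[symmetric] algebra_simps del: funpow.simps)
qed

lemma sl2_lower:
  fixes X Y H :: "'k::field mpoly \<Rightarrow> 'k mpoly"
  assumes XY: "\<And>p. X (Y p) = Y (X p) + H p" and HY: "\<And>p. H (Y p) = Y (H p) + scl (-2) (Y p)"
    and Y: "is_der Y" and y: "X y = 0" and Hy: "H y = scl c y"
  shows "X ((Y ^^ Suc k) y) = scl (of_nat (Suc k) * (c - of_nat k)) ((Y ^^ k) y)"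
proof (induction k)
  case 0
  then show ?case by (simp add: XY y Hy der_0[OF Y])
next
  case (Suc k)
  have H: "H ((Y ^^ Suc k) y) = scl (c + of_nat (Suc k) * (-2)) ((Y ^^ Suc k) y)"
    by (rule comm_pow_eig[OF HY Y Hy])
  have "X ((Y ^^ Suc (Suc k)) y) = Y (X ((Y ^^ Suc k) y)) + H ((Y ^^ Suc k) y)"
    by (simp only: funpow_Suc_app XY)
  also have "\<dots> = scl (of_nat (Suc k) * (c - of_nat k)) ((Y ^^ Suc k) y) + scl (c + of_nat (Suc k) * (-2)) ((Y ^^ Suc k) y)"
    using Suc H by (simp add: der_scl[OF Y])
  also have "\<dots> = scl (of_nat (Suc (Suc k)) * (c - of_nat (Suc k))) ((Y ^^ Suc k) y)"
    by (simp only: scl_add_left[symmetric]) (simp add: algebra_simps)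
  finally show ?case .
qed




lemma Const_numeral: "Const (numeral k) = (numeral k :: 'k::comm_ring_1 mpoly)"
  by (simp add: Const_def)

lemmas scl_unfold = scl_def Const_add Const_diff Const_minus Const_mult Const_of_nat Const_1 Const_0 Const_numeral

locale hw =
  fixes n d :: nat and a :: "'k::field_char_0 mpoly"
  assumes a_nz: "a \<noteq> 0" and aKA: "a \<in> KA n"
    and D1a: "D1 n a = 0" and D2a: "D2 n a = 0" and D3a: "D3 n a = 0" and H1a: "Dh1 n a = 0"
    and E1a: "E1 n a = 0" and E2a: "E2 n a = scl (of_nat d) a"
    and H2a: "(Dh2 n ^^ Suc d) a = 0"
begin

definition v :: "nat \<Rightarrow> nat \<Rightarrow> 'k mpoly" where
  "v i j = (Dh2 n ^^ j) ((Dh3 n ^^ i) a)"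

lemma scl_neg: "scl (- c) p = - scl c p"
  by (simp add: scl_def Const_minus)

lemma v00: "v 0 0 = a" by (simp add: v_def)

lemma F1: "Dh3 n (v i j) = v (Suc i) j"
  unfolding v_def by (simp add: comm_funpow0[of "Dh3 n" "Dh2 n", OF C1] del: funpow.simps) simp

lemma F2: "Dh2 n (v i j) = v i (Suc j)"
  unfolding v_def by simp

lemma H1_H3pow: "Dh1 n ((Dh3 n ^^ i) a) = 0"
  by (simp add: comm_funpow0[of "Dh1 n" "Dh3 n", OF C3] H1a der_funpow_0[OF is_der_ops(6)] del: funpow.simps)

lemma F3: "Dh1 n (v i (Suc j)) = scl (- of_nat (Suc j)) (v (Suc i) j)"
proof -
  have "Dh1 n (v i (Suc j)) = (Dh2 n ^^ Suc j) (Dh1 n ((Dh3 n ^^ i) a)) + scl (of_nat (Suc j)) ((Dh2 n ^^ j) (- Dh3 n ((Dh3 n ^^ i) a)))"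
    unfolding v_def by (rule comm_pow[where Z="\<lambda>p. - Dh3 n p"]) (simp_all add: C2 C1 der_uminus[OF is_der_ops(5)] is_der_ops)
  also have "\<dots> = scl (- of_nat (Suc j)) (v (Suc i) j)"
    by (simp only: H1_H3pow der_funpow_0[OF is_der_ops(5)] der_funpow_uminus[OF is_der_ops(5)])
       (simp add: v_def scl_unfold algebra_simps)
  finally show ?thesis .
qed

lemma F3_0: "Dh1 n (v i 0) = 0"
  by (simp add: v_def H1_H3pow del: funpow.simps)

lemma C1': "Dh2 n (Dh3 n p) = Dh3 n (Dh2 n p)" by (simp add: C1)

lemma H3pow_H2: "(Dh3 n ^^ i) (Dh2 n p) = Dh2 n ((Dh3 n ^^ i) p)"
  by (rule comm_funpow0[symmetric]) (rule C1')

lemma D1_H3pow_Suc: "D1 n ((Dh3 n ^^ Suc i) a) = scl (- of_nat (Suc i)) (Dh2 n ((Dh3 n ^^ i) a))"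
proof -
  have "D1 n ((Dh3 n ^^ Suc i) a) = (Dh3 n ^^ Suc i) (D1 n a) + scl (of_nat (Suc i)) ((Dh3 n ^^ i) (- Dh2 n a))"
    by (rule comm_pow[where Z="\<lambda>p. - Dh2 n p"]) (simp_all add: C5 C1' der_uminus[OF is_der_ops(6)] is_der_ops)
  also have "\<dots> = scl (- of_nat (Suc i)) (Dh2 n ((Dh3 n ^^ i) a))"
    by (simp only: D1a der_funpow_0[OF is_der_ops(6)] der_funpow_uminus[OF is_der_ops(6)] H3pow_H2)
       (simp add: scl_unfold algebra_simps)
  finally show ?thesis .
qed

lemma D1_H3pow_0: "D1 n ((Dh3 n ^^ 0) a) = 0" by (simp add: D1a)

lemma F4: "D1 n (v (Suc i) j) = scl (- of_nat (Suc i)) (v i (Suc j))"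
proof -
  have "D1 n (v (Suc i) j) = (Dh2 n ^^ j) (D1 n ((Dh3 n ^^ Suc i) a))"
    unfolding v_def by (rule comm_funpow0) (rule C4)
  also have "\<dots> = scl (- of_nat (Suc i)) (v i (Suc j))"
    by (simp only: D1_H3pow_Suc der_funpow_scl[OF is_der_ops(5)]) (simp add: v_def funpow_swap1)
  finally show ?thesis .
qed

lemma F4_0: "D1 n (v 0 j) = 0"
proof -
  have "D1 n (v 0 j) = (Dh2 n ^^ j) (D1 n ((Dh3 n ^^ 0) a))"
    unfolding v_def by (rule comm_funpow0) (rule C4)
  then show ?thesis by (simp add: D1a der_funpow_0[OF is_der_ops(5)])
qed

lemma D2_H3pow: "D2 n ((Dh3 n ^^ i) a) = 0"
proof (cases i)
  case 0 then show ?thesis by (simp add: D2a)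
next
  case (Suc i')
  have "D2 n ((Dh3 n ^^ Suc i') a) = (Dh3 n ^^ Suc i') (D2 n a) + scl (of_nat (Suc i')) ((Dh3 n ^^ i') (Dh1 n a))"
    by (rule comm_pow[where Z="Dh1 n"]) (simp_all add: C6 C3 is_der_ops)
  then show ?thesis using Suc by (simp only: D2a H1a der_funpow_0[OF is_der_ops(6)]) simp
qed

lemma E2_H3pow: "E2 n ((Dh3 n ^^ i) a) = scl (of_nat d - of_nat i) ((Dh3 n ^^ i) a)"
proof -
  have "E2 n ((Dh3 n ^^ i) a) = scl (of_nat d + of_nat i * (-1)) ((Dh3 n ^^ i) a)"
    by (rule comm_pow_eig) (simp_all add: C13 scl_neg1 is_der_ops E2a)
  then show ?thesis by simp
qed

lemma F5: "D2 n (v i (Suc j)) = scl (of_nat (Suc j) * (of_nat d - of_nat i - of_nat j)) (v i j)"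
proof -
  have "D2 n ((Dh2 n ^^ Suc j) ((Dh3 n ^^ i) a)) = scl (of_nat (Suc j) * ((of_nat d - of_nat i) - of_nat j)) ((Dh2 n ^^ j) ((Dh3 n ^^ i) a))"
    by (rule sl2_lower[where H="E2 n"]) (simp_all add: C7 C12 is_der_ops D2_H3pow E2_H3pow)
  then show ?thesis by (simp add: v_def)
qed

lemma F5_0: "D2 n (v i 0) = 0"
  using D2_H3pow by (simp add: v_def)

lemma E1E2_H3: "E1 n (Dh3 n p) + E2 n (Dh3 n p) = Dh3 n (E1 n p + E2 n p) + scl (-2) (Dh3 n p)"
  by (simp add: C11 C13 der_add[OF is_der_ops(6)])

lemma D3_H3pow_Suc: "D3 n ((Dh3 n ^^ Suc i) a) = scl (of_nat (Suc i) * (of_nat d - of_nat i)) ((Dh3 n ^^ i) a)"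
  by (rule sl2_lower[where H="\<lambda>p. E1 n p + E2 n p"]) (simp_all add: C8 E1E2_H3 is_der_ops D3a E1a E2a)

lemma F6: "D3 n (v (Suc i) j) = scl (of_nat (Suc i) * (of_nat d - of_nat i - of_nat j)) (v i j)"
proof (cases j)
  case 0
  then show ?thesis using D3_H3pow_Suc[of i] by (simp add: v_def del: funpow.simps)
next
  case (Suc j')
  have "D3 n ((Dh2 n ^^ Suc j') ((Dh3 n ^^ Suc i) a)) = (Dh2 n ^^ Suc j') (D3 n ((Dh3 n ^^ Suc i) a))
      + scl (of_nat (Suc j')) ((Dh2 n ^^ j') (D1 n ((Dh3 n ^^ Suc i) a)))"
    by (rule comm_pow[where Z="D1 n"]) (simp_all add: C9 C4 is_der_ops)
  also have "\<dots> = scl (of_nat (Suc i) * (of_nat d - of_nat i)) (v i (Suc j'))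
      + scl (of_nat (Suc j')) (scl (- of_nat (Suc i)) (v i (Suc j')))"
    by (simp only: D3_H3pow_Suc D1_H3pow_Suc der_funpow_scl[OF is_der_ops(5)])
       (simp add: v_def funpow_swap1)
  also have "\<dots> = scl (of_nat (Suc i) * (of_nat d - of_nat i - of_nat j)) (v i j)"
    using Suc by (simp add: scl_scl scl_add_left[symmetric] algebra_simps)
  finally show ?thesis using Suc by (simp add: v_def del: funpow.simps)
qed

lemma F6_0: "D3 n (v 0 j) = 0"
proof (cases j)
  case 0 then show ?thesis by (simp add: v_def D3a)
next
  case (Suc j')
  have "D3 n ((Dh2 n ^^ Suc j') ((Dh3 n ^^ 0) a)) = (Dh2 n ^^ Suc j') (D3 n ((Dh3 n ^^ 0) a))
      + scl (of_nat (Suc j')) ((Dh2 n ^^ j') (D1 n ((Dh3 n ^^ 0) a)))"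
    by (rule comm_pow[where Z="D1 n"]) (simp_all add: C9 C4 is_der_ops)
  then show ?thesis using Suc by (simp add: v_def D3a D1a der_funpow_0[OF is_der_ops(5)] del: funpow.simps)
qed

lemma F7a: "E1 n (v i j) = scl (of_nat j - of_nat i) (v i j)"
proof -
  have h: "E1 n ((Dh3 n ^^ i) a) = scl (0 + of_nat i * (-1)) ((Dh3 n ^^ i) a)"
    by (rule comm_pow_eig) (simp_all add: C11 scl_neg1 is_der_ops E1a)
  have "E1 n (v i j) = scl ((0 + of_nat i * (-1)) + of_nat j * 1) (v i j)"
    unfolding v_def by (rule comm_pow_eig) (simp_all add: C10 is_der_ops h)
  then show ?thesis by simp
qed

lemma F7b: "E2 n (v i j) = scl (of_nat d - of_nat i - 2 * of_nat j) (v i j)"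
proof -
  have "E2 n (v i j) = scl ((of_nat d - of_nat i) + of_nat j * (-2)) (v i j)"
    unfolding v_def by (rule comm_pow_eig) (simp_all add: C12 is_der_ops E2_H3pow del: scl_neg_numeral)
  then show ?thesis by (simp add: algebra_simps)
qed

end



interpretation SM: module "scl :: 'k::comm_ring_1 \<Rightarrow> 'k mpoly \<Rightarrow> 'k mpoly"
  by (rule module_scl)

lemma KA_add: "p \<in> KA n \<Longrightarrow> q \<in> KA n \<Longrightarrow> p + q \<in> KA n"
  using vars_add[of p q] by (auto simp: KA_def)
lemma KA_mult: "p \<in> KA n \<Longrightarrow> q \<in> KA n \<Longrightarrow> p * q \<in> KA n"
  using vars_mult[of p q] by (auto simp: KA_def)
lemma KA_Const: "Const c \<in> KA n"
  by (simp add: KA_def)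
lemma KA_0: "0 \<in> KA n"
  by (simp add: KA_def)
lemma KA_of_nat: "(of_nat k :: 'k::comm_ring_1 mpoly) \<in> KA n"
  using KA_Const[of "of_nat k"] by (simp add: Const_of_nat)
lemma KA_of_int: "(of_int k :: 'k::comm_ring_1 mpoly) \<in> KA n"
  using KA_Const[of "of_int k"] by (simp add: Const_of_int)
lemma KA_aa: "(aa n i j :: 'k::comm_ring_1 mpoly) \<in> KA n"
  by (auto simp: aa_def KA_def vars_Var)
lemma KA_scl: "p \<in> KA n \<Longrightarrow> scl c p \<in> KA n"
  by (simp add: scl_def KA_mult KA_Const)
lemma KA_subspace: "SM.subspace (KA n :: 'k::comm_ring_1 mpoly set)"
  by (simp add: SM.subspace_def KA_0 KA_add KA_scl)
lemma KA_uminus: "p \<in> KA n \<Longrightarrow> - p \<in> KA n"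
  by (simp add: KA_def vars_uminus)

lemma KA_diff: "p \<in> KA n \<Longrightarrow> q \<in> KA n \<Longrightarrow> p - q \<in> KA n"
  using KA_add[of p n "- q"] KA_uminus[of q n] by simp
lemma KA_numeral: "(numeral k :: 'k::comm_ring_1 mpoly) \<in> KA n"
  using KA_Const[of "numeral k"] by (simp add: Const_def)

lemmas KA_intros = KA_add KA_mult KA_of_nat KA_of_int KA_aa KA_0 KA_uminus KA_diff KA_numeral

lemma ops_KA_Var:
  assumes "x \<in> {A i j |i j. i + j \<le> n}" "D \<in> sl3_ops n"
  shows "D (Var x) \<in> (KA n :: 'k::comm_ring_1 mpoly set)"
proof -
  from assms(1) obtain i j where x: "x = A i j" "i + j \<le> n" by auto
  show ?thesis using assms(2) x
    by (auto simp: sl3_ops_def ops_Var intro!: KA_intros)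
qed

lemma ops_KA:
  assumes "D \<in> sl3_ops n" "p \<in> KA n"
  shows "D p \<in> (KA n :: 'k::comm_ring_1 mpoly set)"
proof -
  have der: "is_der D" using assms(1) by (auto simp: sl3_ops_def is_der_ops)
  have "vars p \<subseteq> {A i j |i j. i + j \<le> n}" using assms(2) by (simp add: KA_def)
  then have "p \<in> KA n \<and> D p \<in> KA n"
  proof (induction p rule: mpoly_induct_vars)
    case (Const c)
    then show ?case by (simp add: KA_Const der_Const[OF der] KA_0)
  next
    case (Var x)
    then show ?case using ops_KA_Var[OF Var assms(1)] by (auto simp: KA_def vars_Var)
  next
    case (add p q)
    then show ?case by (simp add: der_add[OF der] KA_add)
  next
    case (mult p q)
    then show ?case by (simp add: der_mult[OF der] KA_add KA_mult)
  qed
  then show ?thesis by simp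
qed

lemma ops_funpow_KA:
  assumes "D \<in> sl3_ops n" "p \<in> KA n"
  shows "(D ^^ k) p \<in> (KA n :: 'k::comm_ring_1 mpoly set)"
  by (induction k) (simp_all add: assms ops_KA)

lemma ops_der: "D \<in> sl3_ops n \<Longrightarrow> is_der D"
  by (auto simp: sl3_ops_def is_der_ops)

lemma ops_mem: "D1 n \<in> sl3_ops n" "D2 n \<in> sl3_ops n" "D3 n \<in> sl3_ops n" "Dh1 n \<in> sl3_ops n"
  "Dh2 n \<in> sl3_ops n" "Dh3 n \<in> sl3_ops n" "E1 n \<in> sl3_ops n" "E2 n \<in> sl3_ops n"
  by (simp_all add: sl3_ops_def)

lemma of_nat_diff_nz:
  assumes "i + m < d"
  shows "(of_nat d - of_nat i - of_nat m :: 'k::field_char_0) \<noteq> 0"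
proof -
  have "(of_nat (d - (i + m)) :: 'k) = of_nat d - of_nat (i + m)"
    using assms by (intro of_nat_diff) simp
  then have eq: "(of_nat d - of_nat i - of_nat m :: 'k) = of_nat (d - (i + m))" by (simp add: algebra_simps)
  have nz: "(of_nat (d - (i + m)) :: 'k) \<noteq> 0" using assms by (simp only: of_nat_eq_0_iff)
  show ?thesis using eq nz by metis
qed

context hw
begin

lemma v_diag: "k \<le> Suc d \<Longrightarrow> v k (Suc d - k) = 0"
proof (induction k)
  case 0
  then show ?case using H2a by (simp add: v_def del: funpow.simps)
next
  case (Suc k)
  then have k: "k \<le> d" by simp
  then have e: "Suc d - k = Suc (d - k)" by simp
  have "Dh1 n (v k (Suc (d - k))) = 0" using Suc k e by (simp add: der_0[OF is_der_ops(4)])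
  then have "scl (- of_nat (Suc (d - k))) (v (Suc k) (d - k)) = 0" by (simp only: F3)
  moreover have "(- of_nat (Suc (d - k)) :: 'k) \<noteq> 0"
    by (metis neg_equal_0_iff_equal of_nat_eq_0_iff Zero_not_Suc)
  ultimately have "v (Suc k) (d - k) = 0" using scl_eq_0_iff by blast
  then show ?case by simp
qed

lemma v_zero:
  assumes "d < i + j"
  shows "v i j = 0"
proof (cases "i \<le> Suc d")
  case True
  then have j: "j = (j - (Suc d - i)) + (Suc d - i)" using assms by simp
  have "v i j = (Dh2 n ^^ (j - (Suc d - i))) (v i (Suc d - i))"
    by (subst j) (simp add: v_def funpow_add)
  then show ?thesis using v_diag[OF True] by (simp add: der_funpow_0[OF is_der_ops(5)])
next
  case False
  then have i: "i = (i - Suc d) + Suc d" by simp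
  have z: "(Dh3 n ^^ Suc d) a = 0" using v_diag[of "Suc d"] by (simp add: v_def del: funpow.simps)
  have "v i j = (Dh2 n ^^ j) ((Dh3 n ^^ (i - Suc d)) ((Dh3 n ^^ Suc d) a))"
    by (subst i) (simp only: v_def funpow_add comp_def)
  then show ?thesis by (simp only: z der_funpow_0[OF is_der_ops(5)] der_funpow_0[OF is_der_ops(6)])
qed

definition coef :: "nat \<Rightarrow> nat \<Rightarrow> 'k" where
  "coef i j = (-1) ^ (i + j) / (\<Prod>t<i + j. of_nat (d - t))"

lemma coef_nz: "i + j \<le> d \<Longrightarrow> coef i j \<noteq> 0"
  by (auto simp: coef_def)

definition SS :: "'k mpoly set" where
  "SS = {scl (coef i j) (v i j) | i j. i + j \<le> d}"

definition VV :: "'k mpoly set" where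
  "VV = SM.span SS"

lemma vV: "v i j \<in> VV"
proof (cases "i + j \<le> d")
  case True
  have "scl (coef i j) (v i j) \<in> VV" using True unfolding VV_def SS_def by (intro SM.span_base) auto
  then have "scl (inverse (coef i j)) (scl (coef i j) (v i j)) \<in> VV" unfolding VV_def by (rule SM.span_scale)
  then show ?thesis using coef_nz[OF True] by (simp add: scl_scl)
next
  case False
  then show ?thesis using v_zero[of i j] by (simp add: VV_def SM.span_zero)
qed

lemma sclV: "x \<in> VV \<Longrightarrow> scl c x \<in> VV"
  unfolding VV_def by (rule SM.span_scale)

lemma zeroV: "0 \<in> VV" by (simp add: VV_def SM.span_zero)

lemma ops_vV: "D \<in> sl3_ops n \<Longrightarrow> D (v i j) \<in> VV"
  unfolding sl3_ops_def
  apply (elim insertE emptyE; simp only:)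
  subgoal by (cases i) (simp_all add: F4_0 F4 sclV vV zeroV)
  subgoal by (cases j) (simp_all add: F5_0 F5 sclV vV zeroV)
  subgoal by (cases i) (simp_all add: F6_0 F6 sclV vV zeroV)
  subgoal by (cases j) (simp_all add: F3_0 F3 sclV vV zeroV)
  subgoal by (simp add: F2 vV)
  subgoal by (simp add: F1 vV)
  subgoal by (simp add: F7a sclV vV)
  subgoal by (simp add: F7b sclV vV)
  done

lemma ops_V:
  assumes D: "D \<in> sl3_ops n" and x: "x \<in> VV"
  shows "D x \<in> VV"
proof -
  have der: "is_der D" using ops_der[OF D] .
  have "SM.span SS \<subseteq> {x. D x \<in> VV}"
  proof (rule SM.span_minimal)
    show "SS \<subseteq> {x. D x \<in> VV}"
      unfolding SS_def using ops_vV[OF D] by (auto simp: der_scl[OF der] sclV)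
    show "SM.subspace {x. D x \<in> VV}"
      unfolding SM.subspace_def
      by (auto simp: der_add[OF der] der_scl[OF der] der_0[OF der] VV_def SM.span_zero SM.span_add SM.span_scale)
  qed
  then show ?thesis using x by (auto simp: VV_def)
qed

lemma vKA: "v i j \<in> KA n"
  unfolding v_def by (intro ops_funpow_KA ops_mem aKA)

lemma V_KA: "VV \<subseteq> KA n"
  unfolding VV_def by (rule SM.span_minimal) (auto simp: SS_def KA_subspace KA_scl vKA)

end




context hw
begin

lemma D2pow: "k \<le> j \<Longrightarrow> \<exists>\<kappa>. (D2 n ^^ k) (v i j) = scl \<kappa> (v i (j - k)) \<and> (i + j \<le> d \<longrightarrow> \<kappa> \<noteq> 0)"
proof (induction k)
  case 0
  then show ?case by (intro exI[of _ 1]) simp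
next
  case (Suc k)
  then obtain \<kappa> where k: "(D2 n ^^ k) (v i j) = scl \<kappa> (v i (j - k))" "i + j \<le> d \<longrightarrow> \<kappa> \<noteq> 0" by auto
  have e: "j - k = Suc (j - Suc k)" using Suc.prems by simp
  let ?c = "of_nat (Suc (j - Suc k)) * (of_nat d - of_nat i - of_nat (j - Suc k)) :: 'k"
  have "(D2 n ^^ Suc k) (v i j) = scl (\<kappa> * ?c) (v i (j - Suc k))"
    by (simp only: funpow_Suc_app k(1) e der_scl[OF is_der_ops(2)] F5 scl_scl)
  moreover have "i + j \<le> d \<longrightarrow> \<kappa> * ?c \<noteq> 0"
  proof
    assume h: "i + j \<le> d"
    have "i + (j - Suc k) < d" using h Suc.prems by simp
    then have n1: "(of_nat d - of_nat i - of_nat (j - Suc k) :: 'k) \<noteq> 0" by (rule of_nat_diff_nz)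
    have n2: "(of_nat (Suc (j - Suc k)) :: 'k) \<noteq> 0" by (simp only: of_nat_eq_0_iff nat.simps not_False_eq_True)
    show "\<kappa> * ?c \<noteq> 0" using k(2) h n1 n2 by (auto simp only: mult_eq_0_iff)
  qed
  ultimately show ?case by blast
qed

lemma D2pow_gt: "j < k \<Longrightarrow> (D2 n ^^ k) (v i j) = 0"
proof -
  assume jk: "j < k"
  obtain \<kappa> where h: "(D2 n ^^ j) (v i j) = scl \<kappa> (v i 0)" using D2pow[of j j i] by auto
  define r where "r = k - Suc j"
  have r: "k = r + Suc j" using jk by (simp add: r_def)
  have "(D2 n ^^ k) (v i j) = (D2 n ^^ r) (D2 n ((D2 n ^^ j) (v i j)))"
    by (simp only: r funpow_add comp_def funpow_Suc_app)
  also have "\<dots> = 0" by (simp only: h der_scl[OF is_der_ops(2)] F5_0 scl_zero_right der_funpow_0[OF is_der_ops(2)])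
  finally show ?thesis .
qed

lemma D3pow: "k \<le> i \<Longrightarrow> \<exists>\<kappa>. (D3 n ^^ k) (v i j) = scl \<kappa> (v (i - k) j) \<and> (i + j \<le> d \<longrightarrow> \<kappa> \<noteq> 0)"
proof (induction k)
  case 0
  then show ?case by (intro exI[of _ 1]) simp
next
  case (Suc k)
  then obtain \<kappa> where k: "(D3 n ^^ k) (v i j) = scl \<kappa> (v (i - k) j)" "i + j \<le> d \<longrightarrow> \<kappa> \<noteq> 0" by auto
  have e: "i - k = Suc (i - Suc k)" using Suc.prems by simp
  let ?c = "of_nat (Suc (i - Suc k)) * (of_nat d - of_nat (i - Suc k) - of_nat j) :: 'k"
  have "(D3 n ^^ Suc k) (v i j) = scl (\<kappa> * ?c) (v (i - Suc k) j)"
    by (simp only: funpow_Suc_app k(1) e der_scl[OF is_der_ops(3)] F6 scl_scl)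
  moreover have "i + j \<le> d \<longrightarrow> \<kappa> * ?c \<noteq> 0"
  proof
    assume h: "i + j \<le> d"
    have "(i - Suc k) + j < d" using h Suc.prems by simp
    then have n1: "(of_nat d - of_nat (i - Suc k) - of_nat j :: 'k) \<noteq> 0" by (rule of_nat_diff_nz)
    have n2: "(of_nat (Suc (i - Suc k)) :: 'k) \<noteq> 0" by (simp only: of_nat_eq_0_iff nat.simps not_False_eq_True)
    show "\<kappa> * ?c \<noteq> 0" using k(2) h n1 n2 by (auto simp only: mult_eq_0_iff)
  qed
  ultimately show ?case by blast
qed

lemma D3pow_gt: "i < k \<Longrightarrow> (D3 n ^^ k) (v i j) = 0"
proof -
  assume ik: "i < k"
  obtain \<kappa> where h: "(D3 n ^^ i) (v i j) = scl \<kappa> (v 0 j)" using D3pow[of i i j] by auto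
  define r where "r = k - Suc i"
  have r: "k = r + Suc i" using ik by (simp add: r_def)
  have "(D3 n ^^ k) (v i j) = (D3 n ^^ r) (D3 n ((D3 n ^^ i) (v i j)))"
    by (simp only: r funpow_add comp_def funpow_Suc_app)
  also have "\<dots> = 0" by (simp only: h der_scl[OF is_der_ops(3)] F6_0 scl_zero_right der_funpow_0[OF is_der_ops(3)])
  finally show ?thesis .
qed

end




context hw
begin

definition TT :: "(nat \<times> nat) set" where "TT = {(i, j). i + j \<le> d}"

lemma finite_TT: "finite TT"
proof -
  have "TT \<subseteq> {..d} \<times> {..d}" by (auto simp: TT_def)
  then show ?thesis by (rule finite_subset) simp
qed

lemma V_explicit:
  assumes "x \<in> VV"
  shows "\<exists>c. x = (\<Sum>ij\<in>TT. scl (c ij) (v (fst ij) (snd ij)))"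
proof -
  let ?L = "{x. \<exists>c. x = (\<Sum>ij\<in>TT. scl (c ij) (v (fst ij) (snd ij)))}"
  have "SM.span SS \<subseteq> ?L"
  proof (rule SM.span_minimal)
    show "SS \<subseteq> ?L"
    proof
      fix x assume "x \<in> SS"
      then obtain i j where x: "x = scl (coef i j) (v i j)" "i + j \<le> d" by (auto simp: SS_def)
      let ?c = "\<lambda>ij. if ij = (i, j) then coef i j else 0"
      have "(\<Sum>ij\<in>TT. scl (?c ij) (v (fst ij) (snd ij))) = (\<Sum>ij\<in>TT. if ij = (i, j) then scl (coef i j) (v i j) else 0)"
        by (rule sum.cong) auto
      also have "\<dots> = x" using x finite_TT by (simp add: sum.delta' TT_def)
      finally show "x \<in> ?L" by auto
    qed
    show "SM.subspace ?L"
      unfolding SM.subspace_def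
    proof (intro conjI ballI allI)
      show "0 \<in> ?L" by (intro CollectI exI[of _ "\<lambda>_. 0"]) simp
    next
      fix x y assume "x \<in> ?L" "y \<in> ?L"
      then obtain c1 c2 where "x = (\<Sum>ij\<in>TT. scl (c1 ij) (v (fst ij) (snd ij)))" "y = (\<Sum>ij\<in>TT. scl (c2 ij) (v (fst ij) (snd ij)))"
        by auto
      then show "x + y \<in> ?L"
        by (intro CollectI exI[of _ "\<lambda>ij. c1 ij + c2 ij"]) (simp add: scl_add_left sum.distrib)
    next
      fix c x assume "x \<in> ?L"
      then obtain c1 where "x = (\<Sum>ij\<in>TT. scl (c1 ij) (v (fst ij) (snd ij)))" by auto
      then show "scl c x \<in> ?L"
        by (intro CollectI exI[of _ "\<lambda>ij. c * c1 ij"]) (simp add: scl_sum scl_scl)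
    qed
  qed
  then show ?thesis using assms by (auto simp: VV_def)
qed

lemma aV: "a \<in> VV" using vV[of 0 0] by (simp add: v00)

lemma V_nonzero: "VV \<noteq> {0}" using aV a_nz by auto

lemma sub_pow: "sl3_submodule n W \<Longrightarrow> D \<in> sl3_ops n \<Longrightarrow> x \<in> W \<Longrightarrow> (D ^^ k) x \<in> W"
  by (induction k) (auto simp: sl3_submodule_def)

lemma irreducible_V:
  assumes W: "sl3_submodule n W" "W \<subseteq> VV" "W \<noteq> {0}"
  shows "W = VV"
proof -
  have subW: "SM.subspace W" using W(1) by (simp add: sl3_submodule_def)
  have "0 \<in> W" using SM.subspace_0[OF subW] .
  then obtain w where w: "w \<in> W" "w \<noteq> 0" using W(3) by blast
  obtain c where wc: "w = (\<Sum>ij\<in>TT. scl (c ij) (v (fst ij) (snd ij)))" using V_explicit w(1) W(2) by blast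
  define tm where "tm ij = scl (c ij) (v (fst ij) (snd ij))" for ij
  define N where "N = {ij\<in>TT. tm ij \<noteq> 0}"
  have finN: "finite N" using finite_TT by (simp add: N_def)
  have Nne: "N \<noteq> {}"
  proof
    assume "N = {}"
    then have "\<forall>ij\<in>TT. tm ij = 0" by (auto simp: N_def)
    then have "w = 0" by (simp add: wc tm_def[symmetric])
    with w show False by simp
  qed
  define M where "M = Max ((\<lambda>ij. fst ij + snd ij) ` N)"
  have "M \<in> (\<lambda>ij. fst ij + snd ij) ` N" unfolding M_def using finN Nne by (intro Max_in) auto
  then obtain i0 j0 where ij0: "(i0, j0) \<in> N" "i0 + j0 = M" by auto
  have maxN: "fst ij + snd ij \<le> i0 + j0" if "ij \<in> N" for ij
    unfolding ij0(2) M_def using finN that by (intro Max_ge) auto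
  have T0: "i0 + j0 \<le> d" using ij0(1) by (auto simp: N_def TT_def)
  have c0: "c (i0, j0) \<noteq> 0" using ij0(1) by (auto simp: N_def tm_def)
  define Z where "Z x = (D3 n ^^ i0) ((D2 n ^^ j0) x)" for x :: "'k mpoly"
  have Zw: "Z w \<in> W" unfolding Z_def by (intro sub_pow[OF W(1)] ops_mem w(1))
  have Zlin: "Z (scl k x) = scl k (Z x)" for k x
    by (simp add: Z_def der_funpow_scl[OF is_der_ops(2)] der_funpow_scl[OF is_der_ops(3)])
  have Zsum: "Z (sum f A) = (\<Sum>x\<in>A. Z (f x))" for f :: "nat \<times> nat \<Rightarrow> 'k mpoly" and A
    by (simp add: Z_def der_funpow_sum[OF is_der_ops(2)] der_funpow_sum[OF is_der_ops(3)])
  have Z0: "Z 0 = 0" by (simp add: Z_def der_funpow_0[OF is_der_ops(2)] der_funpow_0[OF is_der_ops(3)])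
  have Zother: "Z (tm ij) = 0" if "ij \<in> TT" "ij \<noteq> (i0, j0)" for ij
  proof (cases "tm ij = 0")
    case True then show ?thesis by (simp add: Z0)
  next
    case False
    obtain i j where ij: "ij = (i, j)" by (cases ij)
    have "ij \<in> N" using that False by (simp add: N_def)
    then have le: "i + j \<le> i0 + j0" using maxN ij by fastforce
    show ?thesis
    proof (cases "j < j0")
      case True
      then show ?thesis by (simp only: tm_def ij fst_conv snd_conv Zlin) (simp add: Z_def D2pow_gt[OF True] der_funpow_0[OF is_der_ops(3)])
    next
      case False
      then have "i < i0" using le that(2) ij by auto
      obtain \<kappa> where h: "(D2 n ^^ j0) (v i j) = scl \<kappa> (v i (j - j0))" using D2pow[of j0 j i] False by auto
      show ?thesis
        by (simp only: tm_def ij fst_conv snd_conv Zlin) (simp add: Z_def h der_funpow_scl[OF is_der_ops(3)] D3pow_gt[OF \<open>i < i0\<close>])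
    qed
  qed
  obtain \<kappa>1 where k1: "(D2 n ^^ j0) (v i0 j0) = scl \<kappa>1 (v i0 0)" "\<kappa>1 \<noteq> 0"
    using D2pow[of j0 j0 i0] T0 by auto
  obtain \<kappa>2 where k2: "(D3 n ^^ i0) (v i0 0) = scl \<kappa>2 (v 0 0)" "\<kappa>2 \<noteq> 0"
    using D3pow[of i0 i0 0] T0 by auto
  have "Z w = (\<Sum>ij\<in>TT. Z (tm ij))" by (simp add: wc tm_def[symmetric] Zsum)
  also have "\<dots> = Z (tm (i0, j0)) + (\<Sum>ij\<in>TT - {(i0, j0)}. Z (tm ij))"
    using finite_TT ij0(1) by (intro sum.remove) (auto simp: N_def)
  also have "\<dots> = Z (tm (i0, j0))"
    using sum.neutral[of "TT - {(i0, j0)}" "\<lambda>ij. Z (tm ij)"] Zother by auto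
  also have "\<dots> = scl (c (i0, j0) * \<kappa>1 * \<kappa>2) a"
    by (simp only: tm_def fst_conv snd_conv Zlin) (simp add: Z_def k1 der_funpow_scl[OF is_der_ops(3)] k2 v00 scl_scl mult.assoc)
  finally have "scl (c (i0, j0) * \<kappa>1 * \<kappa>2) a \<in> W" using Zw by simp
  then have "scl (inverse (c (i0, j0) * \<kappa>1 * \<kappa>2)) (scl (c (i0, j0) * \<kappa>1 * \<kappa>2) a) \<in> W"
    by (rule SM.subspace_scale[OF subW])
  moreover have "c (i0, j0) * \<kappa>1 * \<kappa>2 \<noteq> 0" using c0 k1(2) k2(2) by simp
  ultimately have aW: "a \<in> W" by (simp only: scl_scl left_inverse scl_one not_False_eq_True)
  have vW: "v i j \<in> W" for i j
    unfolding v_def by (intro sub_pow[OF W(1)] ops_mem aW)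
  have "VV \<subseteq> W"
    unfolding VV_def by (rule SM.span_minimal) (auto simp: SS_def vW SM.subspace_scale[OF subW] subW)
  then show ?thesis using W(2) by blast
qed

end




context hw
begin

lemma SS_image: "SS = (\<lambda>ij. scl (coef (fst ij) (snd ij)) (v (fst ij) (snd ij))) ` TT"
  by (auto simp: SS_def TT_def image_def)

lemma iso_VV: "iso_Gamma n VV 0 d"
  unfolding iso_Gamma_def irreducible_sl3_submodule_def sl3_submodule_def
proof (intro conjI)
  show "SM.subspace VV" by (simp add: VV_def)
  show "VV \<subseteq> KA n" by (rule V_KA)
  show "\<forall>D\<in>sl3_ops n. \<forall>v\<in>VV. D v \<in> VV" using ops_V by blast
  show "VV \<noteq> {0}" by (rule V_nonzero)
  show "\<forall>W. (SM.subspace W \<and> W \<subseteq> KA n \<and> (\<forall>D\<in>sl3_ops n. \<forall>v\<in>W. D v \<in> W)) \<and> W \<subseteq> VV \<longrightarrow> W = {0} \<or> W = VV"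
    using irreducible_V unfolding sl3_submodule_def by blast
  show "\<exists>B. finite B \<and> VV = SM.span B"
    using finite_TT by (intro exI[of _ SS]) (simp add: SS_image VV_def)
  show "\<exists>v\<in>VV. v \<noteq> 0 \<and> D1 n v = 0 \<and> D2 n v = 0 \<and> D3 n v = 0 \<and> E1 n v = scl (of_nat 0) v \<and> E2 n v = scl (of_nat d) v"
    using aV a_nz D1a D2a D3a E1a E2a by auto
qed

lemma iso_main: "iso_Gamma n (module.span scl
              {scl ((-1) ^ (i + j) / (\<Prod>t<i + j. of_nat (d - t)))
                   ((Dh2 n ^^ j) ((Dh3 n ^^ i) a)) | i j. i + j \<le> d}) 0 d"
  using iso_VV by (simp add: VV_def SS_def coef_def v_def)

end

lemma KAU_add: "p \<in> KAU n \<Longrightarrow> q \<in> KAU n \<Longrightarrow> p + q \<in> KAU n"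
  using vars_add[of p q] by (auto simp: KAU_def)
lemma KAU_mult: "p \<in> KAU n \<Longrightarrow> q \<in> KAU n \<Longrightarrow> p * q \<in> KAU n"
  using vars_mult[of p q] by (auto simp: KAU_def)
lemma KAU_scl: "p \<in> KAU n \<Longrightarrow> scl c p \<in> KAU n"
  unfolding scl_def by (rule KAU_mult) (simp_all add: KAU_def)
lemma KAU_1: "1 \<in> KAU n"
proof -
  have "vars (1 :: 'a::comm_ring_1 mpoly) = {}" using vars_Const[of "1::'a"] by simp
  then show ?thesis by (simp add: KAU_def)
qed
lemma KAU_0: "0 \<in> KAU n"
  by (simp add: KAU_def)
lemma KAU_pow: "p \<in> KAU n \<Longrightarrow> p ^ k \<in> KAU n"
  by (induction k) (simp_all add: KAU_1 KAU_mult)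
lemma KAU_sum: "(\<And>x. x \<in> S \<Longrightarrow> f x \<in> KAU n) \<Longrightarrow> sum f S \<in> KAU n"
  by (induction S rule: infinite_finite_induct) (simp_all add: KAU_0 KAU_add)
lemma KA_KAU: "p \<in> KA n \<Longrightarrow> p \<in> KAU n"
  by (auto simp: KA_def KAU_def)
lemma KAU_U: "k \<in> {1, 2, 3} \<Longrightarrow> Var (U k) \<in> KAU n"
  by (auto simp: KAU_def vars_Var)

definition uw :: "(var \<Rightarrow>\<^sub>0 nat) \<Rightarrow> var \<Rightarrow> nat" where
  "uw m x = (case x of U _ \<Rightarrow> Poly_Mapping.lookup m x | A _ _ \<Rightarrow> 0)"

lemma udeg_superset: "finite K \<Longrightarrow> Poly_Mapping.keys m \<subseteq> K \<Longrightarrow> udeg m = (\<Sum>x\<in>K. uw m x)"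
  unfolding udeg_def uw_def[symmetric]
  by (rule sum.mono_neutral_left) (auto simp: uw_def in_keys_iff split: var.splits)

lemma udeg_add: "udeg (m1 + m2) = udeg m1 + udeg m2"
proof -
  let ?K = "Poly_Mapping.keys m1 \<union> Poly_Mapping.keys m2"
  have "udeg (m1 + m2) = (\<Sum>x\<in>?K. uw (m1 + m2) x)" by (rule udeg_superset) (auto simp: keys_add_nat)
  also have "\<dots> = (\<Sum>x\<in>?K. uw m1 x + uw m2 x)"
    by (rule sum.cong) (auto simp: uw_def lookup_add split: var.splits)
  also have "\<dots> = udeg m1 + udeg m2"
    by (simp add: sum.distrib udeg_superset[of ?K])
  finally show ?thesis .
qed

lemma udeg_0: "udeg 0 = 0" by (simp add: udeg_def)

definition uhom :: "nat \<Rightarrow> 'k::comm_ring_1 mpoly \<Rightarrow> bool" where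
  "uhom k p \<longleftrightarrow> (\<forall>m\<in>Poly_Mapping.keys p. udeg m = k)"

lemma uhom_add: "uhom k p \<Longrightarrow> uhom k q \<Longrightarrow> uhom k (p + q)"
  using keys_add[of p q] by (auto simp: uhom_def)
lemma uhom_0: "uhom k 0" by (simp add: uhom_def)
lemma uhom_sum: "(\<And>x. x \<in> S \<Longrightarrow> uhom k (f x)) \<Longrightarrow> uhom k (sum f S)"
  by (induction S rule: infinite_finite_induct) (simp_all add: uhom_0 uhom_add)
lemma uhom_mult: "uhom k1 p \<Longrightarrow> uhom k2 q \<Longrightarrow> uhom (k1 + k2) (p * q)"
  using keys_mult[of p q] by (auto simp: uhom_def udeg_add)
lemma uhom_1: "uhom 0 (1 :: 'k::comm_ring_1 mpoly)" by (simp add: uhom_def udeg_0)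
lemma uhom_Const: "uhom 0 (Const c :: 'k::comm_ring_1 mpoly)" by (simp add: uhom_def udeg_0 Const_def)
lemma uhom_scl: "uhom k p \<Longrightarrow> uhom k (scl c p)"
  using uhom_mult[OF uhom_Const[of c] ] by (simp add: scl_def)
lemma uhom_pow: "uhom k p \<Longrightarrow> uhom (k * e) (p ^ e)"
proof (induction e)
  case 0 then show ?case by (simp add: uhom_1)
next
  case (Suc e)
  then show ?case using uhom_mult[of k p "k * e" "p ^ e"] by (simp add: add.commute)
qed
lemma uhom_U: "uhom 1 (Var (U k) :: 'k::comm_ring_1 mpoly)"
  by (simp add: uhom_def Var_def udeg_def uw_def)
lemma uhom_KA: "p \<in> KA n \<Longrightarrow> uhom 0 p"
  unfolding uhom_def
proof
  fix m assume p: "p \<in> KA n" and m: "m \<in> Poly_Mapping.keys p"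
  have "Poly_Mapping.keys m \<subseteq> vars p" using m by (auto simp: vars_def)
  then have "\<forall>x\<in>Poly_Mapping.keys m. \<exists>i j. x = A i j" using p by (auto simp: KA_def)
  then show "udeg m = 0" unfolding udeg_def by (intro sum.neutral) auto
qed




lemma sum_shift0:
  fixes g h :: "nat \<Rightarrow> 'a::comm_monoid_add"
  assumes "g 0 = 0" "\<And>j. g (Suc j) = h j" "h d = 0"
  shows "(\<Sum>j<Suc d. g j) = (\<Sum>j<Suc d. h j)"
proof -
  have "(\<Sum>j<Suc d. g j) = g 0 + (\<Sum>j<d. g (Suc j))" by (rule sum.lessThan_Suc_shift)
  also have "\<dots> = (\<Sum>j<d. h j)" using assms by simp
  also have "\<dots> = (\<Sum>j<Suc d. h j)" using assms by simp
  finally show ?thesis .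
qed

lemma der_term:
  assumes "is_der X"
  shows "X (q * p3 ^ e * p1 ^ i * p2 ^ j) = X q * p3 ^ e * p1 ^ i * p2 ^ j
     + q * (of_nat e * p3 ^ (e - 1) * X p3) * p1 ^ i * p2 ^ j
     + q * p3 ^ e * (of_nat i * p1 ^ (i - 1) * X p1) * p2 ^ j
     + q * p3 ^ e * p1 ^ i * (of_nat j * p2 ^ (j - 1) * X p2)"
  by (simp add: der_mult[OF assms] der_pow'[OF assms] algebra_simps)

context hw
begin

definition cf :: "nat \<Rightarrow> nat \<Rightarrow> 'k" where
  "cf i j = (-1) ^ (i + j) / (fact i * fact j)"

lemma cf_Suc_j: "cf i (Suc j) * of_nat (Suc j) = - cf i j"
proof -
  have "(of_nat (Suc j) :: 'k) \<noteq> 0" by (simp only: of_nat_eq_0_iff nat.simps not_False_eq_True)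
  then show ?thesis unfolding cf_def
    apply (simp only: fact_Suc)
    apply (simp add: divide_simps del: of_nat_Suc)
    done
qed

lemma cf_Suc_i: "cf (Suc i) j * of_nat (Suc i) = - cf i j"
proof -
  have "(of_nat (Suc i) :: 'k) \<noteq> 0" by (simp only: of_nat_eq_0_iff nat.simps not_False_eq_True)
  then show ?thesis unfolding cf_def
    apply (simp only: fact_Suc)
    apply (simp add: divide_simps del: of_nat_Suc)
    done
qed

abbreviation uu :: "nat \<Rightarrow> 'k mpoly" where "uu k \<equiv> Var (U k)"

definition t :: "nat \<Rightarrow> nat \<Rightarrow> 'k mpoly" where
  "t i j = scl (cf i j) (v i j * uu 3 ^ (d - (i + j)) * uu 1 ^ i * uu 2 ^ j)"

definition PP :: "'k mpoly" where
  "PP = (\<Sum>(i, j)\<in>TT. t i j)"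

lemma t_zero: "d < i + j \<Longrightarrow> t i j = 0"
  by (simp add: t_def v_zero)

lemma t_nz: "t i j \<noteq> 0 \<Longrightarrow> i + j \<le> d"
  using t_zero[of i j] by linarith

lemma PP_box: "PP = (\<Sum>i<Suc d. \<Sum>j<Suc d. t i j)"
proof -
  have "PP = (\<Sum>(i, j)\<in>{..<Suc d} \<times> {..<Suc d}. t i j)"
    unfolding PP_def
    by (rule sum.mono_neutral_left) (auto simp: TT_def dest: t_nz)
  also have "\<dots> = (\<Sum>i<Suc d. \<Sum>j<Suc d. t i j)"
    by (simp only: sum.cartesian_product)
  finally show ?thesis .
qed

lemma u_ops:
  "Dh2 n (uu 1) = 0" "Dh2 n (uu 2) = uu 3" "Dh2 n (uu 3) = 0"
  "Dh1 n (uu 1) = uu 2" "Dh1 n (uu 2) = 0" "Dh1 n (uu 3) = 0"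
  "D3 n (uu 1) = 0" "D3 n (uu 2) = 0" "D3 n (uu 3) = uu 1"
  by (simp_all add: ops_Var)

lemma u_ops':
  "Dh2 n (Var (U (Suc 0))) = 0" "Dh1 n (Var (U (Suc 0))) = uu 2" "D3 n (Var (U (Suc 0))) = 0"
  by (simp_all add: ops_Var)

lemma PP_Dh2: "Dh2 n PP = 0"
proof -
  define f where "f i j = scl (cf i j) (v i (Suc j) * uu 3 ^ (d - (i + j)) * uu 1 ^ i * uu 2 ^ j)" for i j
  define g where "g i j = scl (cf i j) (v i j * uu 3 ^ (d - (i + j)) * uu 1 ^ i * (of_nat j * uu 2 ^ (j - 1) * uu 3))" for i j
  have split: "Dh2 n (t i j) = f i j + g i j" for i j
    unfolding t_def f_def g_def
    by (simp add: der_scl[OF is_der_ops(5)] der_term[OF is_der_ops(5)] u_ops u_ops' F2 scl_add_right)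
  have g0: "g i 0 = 0" for i by (simp add: g_def)
  have gS: "g i (Suc j) = - f i j" for i j
  proof (cases "i + Suc j \<le> d")
    case True
    then obtain e where e: "d - (i + j) = Suc e" "d - (i + Suc j) = e" by (metis Suc_diff_le add_Suc_right diff_Suc_Suc)
    have c: "cf i j = - (cf i (Suc j) * of_nat (Suc j))" using cf_Suc_j[of i j] by simp
    show ?thesis unfolding f_def g_def
      by (simp only: e c) (simp add: scl_unfold algebra_simps)
  next
    case False
    then show ?thesis by (simp add: f_def g_def v_zero)
  qed
  have fd: "f i d = 0" for i by (simp add: f_def v_zero)
  have "Dh2 n PP = (\<Sum>i<Suc d. \<Sum>j<Suc d. f i j + g i j)"
    unfolding PP_box by (simp only: der_sum[OF is_der_ops(5)] split)
  also have "\<dots> = (\<Sum>i<Suc d. 0)"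
  proof (rule sum.cong[OF refl])
    fix i
    have "(\<Sum>j<Suc d. f i j + g i j) = (\<Sum>j<Suc d. f i j) + (\<Sum>j<Suc d. g i j)" by (rule sum.distrib)
    also have "(\<Sum>j<Suc d. g i j) = (\<Sum>j<Suc d. - f i j)" by (rule sum_shift0) (simp_all add: g0 gS fd)
    finally show "(\<Sum>j<Suc d. f i j + g i j) = 0" by (simp only: sum_negf) simp
  qed
  also have "\<dots> = 0" by simp
  finally show ?thesis .
qed

lemma PP_Dh1: "Dh1 n PP = 0"
proof -
  define \<alpha> where "\<alpha> i j = scl (cf i j) (Dh1 n (v i j) * uu 3 ^ (d - (i + j)) * uu 1 ^ i * uu 2 ^ j)" for i j
  define \<beta> where "\<beta> i j = scl (cf i j) (v i j * uu 3 ^ (d - (i + j)) * (of_nat i * uu 1 ^ (i - 1) * uu 2) * uu 2 ^ j)" for i j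
  define h where "h i j = scl (cf (Suc i) j * of_nat (Suc i)) (v (Suc i) j * uu 3 ^ (d - (Suc i + j)) * uu 1 ^ i * uu 2 ^ (Suc j))" for i j
  have split: "Dh1 n (t i j) = \<alpha> i j + \<beta> i j" for i j
    unfolding t_def \<alpha>_def \<beta>_def
    by (simp add: der_scl[OF is_der_ops(4)] der_term[OF is_der_ops(4)] u_ops u_ops' scl_add_right)
  have \<alpha>0: "\<alpha> i 0 = 0" for i by (simp add: \<alpha>_def F3_0)
  have \<alpha>S: "\<alpha> i (Suc j) = - h i j" for i j
  proof -
    have e1: "cf i (Suc j) * - of_nat (Suc j) = cf i j" by (simp only: mult_minus_right cf_Suc_j minus_minus)
    have e2: "cf (Suc i) j * of_nat (Suc i) = - cf i j" by (rule cf_Suc_i)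
    show ?thesis unfolding \<alpha>_def h_def
      by (simp only: F3 e2 scl_mult_left scl_scl e1) (simp add: scl_neg)
  qed
  have \<beta>0: "\<beta> 0 j = 0" for j by (simp add: \<beta>_def)
  have \<beta>S: "\<beta> (Suc i) j = h i j" for i j
    unfolding \<beta>_def h_def by (simp add: scl_unfold algebra_simps)
  have hd: "h d j = 0" for j by (simp add: h_def v_zero)
  have hi: "h i d = 0" for i by (simp add: h_def v_zero)
  have s1: "Dh1 n PP = (\<Sum>i<Suc d. \<Sum>j<Suc d. \<alpha> i j) + (\<Sum>i<Suc d. \<Sum>j<Suc d. \<beta> i j)"
    unfolding PP_box by (simp only: der_sum[OF is_der_ops(4)] split sum.distrib)
  have s2: "(\<Sum>i<Suc d. \<Sum>j<Suc d. \<alpha> i j) = (\<Sum>i<Suc d. \<Sum>j<Suc d. - h i j)"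
    by (rule sum.cong[OF refl], rule sum_shift0) (simp_all add: \<alpha>0 \<alpha>S hi)
  have s3: "(\<Sum>i<Suc d. \<Sum>j<Suc d. \<beta> i j) = (\<Sum>j<Suc d. \<Sum>i<Suc d. \<beta> i j)" by (rule sum.swap)
  have s4: "(\<Sum>j<Suc d. \<Sum>i<Suc d. \<beta> i j) = (\<Sum>j<Suc d. \<Sum>i<Suc d. h i j)"
    by (rule sum.cong[OF refl], rule sum_shift0) (simp_all add: \<beta>0 \<beta>S hd)
  have s5: "(\<Sum>j<Suc d. \<Sum>i<Suc d. h i j) = (\<Sum>i<Suc d. \<Sum>j<Suc d. h i j)" by (rule sum.swap)
  show ?thesis by (simp only: s1 s2 s3 s4 s5 sum_negf) simp
qed

lemma PP_D3: "D3 n PP = 0"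
proof -
  define \<gamma> where "\<gamma> i j = scl (cf i j) (D3 n (v i j) * uu 3 ^ (d - (i + j)) * uu 1 ^ i * uu 2 ^ j)" for i j
  define \<delta> where "\<delta> i j = scl (cf i j) (v i j * (of_nat (d - (i + j)) * uu 3 ^ (d - (i + j) - 1) * uu 1) * uu 1 ^ i * uu 2 ^ j)" for i j
  have split: "D3 n (t i j) = \<gamma> i j + \<delta> i j" for i j
    unfolding t_def \<gamma>_def \<delta>_def
    by (simp add: der_scl[OF is_der_ops(3)] der_term[OF is_der_ops(3)] u_ops u_ops' scl_add_right)
  have \<gamma>0: "\<gamma> 0 j = 0" for j by (simp add: \<gamma>_def F6_0)
  have \<gamma>S: "\<gamma> (Suc i) j = - \<delta> i j" for i j
  proof (cases "i + j < d")
    case True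
    then obtain e where e: "d - (i + j) = Suc e" "d - (Suc i + j) = e" by (metis Suc_diff_Suc add_Suc)
    have "d = i + j + Suc e" using e True by simp
    then have s: "(of_nat d - of_nat i - of_nat j :: 'k) = of_nat (Suc e)"
      by (simp only: of_nat_add) simp
    have c: "cf i j = - (cf (Suc i) j * of_nat (Suc i))" using cf_Suc_i[of i j] by simp
    show ?thesis unfolding \<gamma>_def \<delta>_def
      by (simp only: F6 e s c) (simp add: scl_unfold algebra_simps)
  next
    case False
    show ?thesis
    proof (cases "i + j = d")
      case True
      then have s0: "(of_nat d - of_nat i - of_nat j :: 'k) = 0" by (simp flip: True)
      show ?thesis unfolding \<gamma>_def \<delta>_def using True by (simp add: F6 s0)
    next
      case False
      then have "d < i + j" using \<open>\<not> i + j < d\<close> by simp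
      then show ?thesis unfolding \<gamma>_def \<delta>_def by (simp add: F6 v_zero der_0[OF is_der_ops(3)])
    qed
  qed
  have \<delta>d: "\<delta> d j = 0" for j
    by (cases j) (simp_all add: \<delta>_def v_zero)
  have s1: "D3 n PP = (\<Sum>i<Suc d. \<Sum>j<Suc d. \<gamma> i j) + (\<Sum>i<Suc d. \<Sum>j<Suc d. \<delta> i j)"
    unfolding PP_box by (simp only: der_sum[OF is_der_ops(3)] split sum.distrib)
  have s2: "(\<Sum>i<Suc d. \<Sum>j<Suc d. \<gamma> i j) = (\<Sum>j<Suc d. \<Sum>i<Suc d. \<gamma> i j)" by (rule sum.swap)
  have s3: "(\<Sum>j<Suc d. \<Sum>i<Suc d. \<gamma> i j) = (\<Sum>j<Suc d. \<Sum>i<Suc d. - \<delta> i j)"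
    by (rule sum.cong[OF refl], rule sum_shift0) (simp_all add: \<gamma>0 \<gamma>S \<delta>d)
  have s4: "(\<Sum>j<Suc d. \<Sum>i<Suc d. - \<delta> i j) = (\<Sum>i<Suc d. \<Sum>j<Suc d. - \<delta> i j)" by (rule sum.swap)
  have s5: "(\<Sum>i<Suc d. \<Sum>j<Suc d. \<gamma> i j) = (\<Sum>i<Suc d. \<Sum>j<Suc d. - \<delta> i j)"
    using s2 s3 s4 by (rule trans[OF trans])
  show ?thesis by (simp only: s1 s5 sum_negf) simp
qed

end




context hw
begin

lemma PP_ops: "D \<in> sl3_ops n \<Longrightarrow> D PP = 0"
proof -
  have h2: "Dh2 n PP = 0" by (rule PP_Dh2)
  have h1: "Dh1 n PP = 0" by (rule PP_Dh1)
  have d3: "D3 n PP = 0" by (rule PP_D3)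
  have h3: "Dh3 n PP = 0"
    using C2[of n PP] by (simp add: h1 h2 der_0[OF is_der_ops(4)] der_0[OF is_der_ops(5)])
  have d1: "D1 n PP = 0"
    using C9[of n PP] by (simp add: h2 d3 der_0[OF is_der_ops(3)] der_0[OF is_der_ops(5)])
  have d2: "D2 n PP = 0"
    using C16[of n PP] by (simp add: h1 d3 der_0[OF is_der_ops(3)] der_0[OF is_der_ops(4)])
  have e1: "E1 n PP = 0"
    using C14[of n PP] by (simp add: h1 d1 der_0[OF is_der_ops(1)] der_0[OF is_der_ops(4)])
  have e2: "E2 n PP = 0"
    using C7[of n PP] by (simp add: h2 d2 der_0[OF is_der_ops(2)] der_0[OF is_der_ops(5)])
  assume "D \<in> sl3_ops n"
  then show ?thesis using h1 h2 h3 d1 d2 d3 e1 e2 by (auto simp: sl3_ops_def)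
qed

lemma t_KAU: "t i j \<in> KAU n"
proof -
  have v: "v i j \<in> KAU n" using vKA by (rule KA_KAU)
  have u: "uu k \<in> KAU n" if "k \<in> {1, 2, 3}" for k using that by (rule KAU_U)
  show ?thesis unfolding t_def
    by (intro KAU_scl KAU_mult KAU_pow v u) simp_all
qed

lemma t_uhom:
  assumes "i + j \<le> d"
  shows "uhom d (t i j)"
proof -
  have "uhom (0 + 1 * (d - (i + j)) + 1 * i + 1 * j) (v i j * uu 3 ^ (d - (i + j)) * uu 1 ^ i * uu 2 ^ j)"
    using uhom_KA[OF vKA, of i j] by (intro uhom_mult uhom_pow uhom_U)
  moreover have "0 + 1 * (d - (i + j)) + 1 * i + 1 * j = d" using assms by simp
  ultimately show ?thesis unfolding t_def by (intro uhom_scl) simp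
qed

lemma PP_contra: "contravariant n d PP"
  unfolding contravariant_def
proof (intro conjI ballI)
  show "PP \<in> KAU n" unfolding PP_def by (intro KAU_sum) (auto simp: t_KAU)
  have "uhom d PP" unfolding PP_def by (intro uhom_sum) (auto simp: TT_def t_uhom)
  then show "udeg m = d" if "m \<in> Poly_Mapping.keys PP" for m using that by (simp add: uhom_def)
  show "D PP = 0" if "D \<in> sl3_ops n" for D using that by (rule PP_ops)
qed

lemma contra_main: "contravariant n d
           (\<Sum>(i, j)\<in>{(i, j). i + j \<le> d}.
              scl ((-1) ^ (i + j) / (fact i * fact j))
                  ((Dh2 n ^^ j) ((Dh3 n ^^ i) a)
                   * Var (U 3) ^ (d - (i + j)) * Var (U 1) ^ i * Var (U 2) ^ j))"
  using PP_contra by (simp add: PP_def t_def cf_def v_def TT_def)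

end

section \<open>Nilpotency and ord\<close>

lemma funpow_zero_mono:
  assumes "is_der D" "(D ^^ N) p = 0" "N \<le> M"
  shows "(D ^^ M) p = 0"
proof -
  have "M = (M - N) + N" using assms(3) by simp
  then have "(D ^^ M) p = (D ^^ (M - N)) ((D ^^ N) p)" by (metis funpow_add comp_apply)
  then show ?thesis using assms(2) der_funpow_0[OF assms(1)] by simp
qed

lemma nil_mult:
  assumes D: "is_der D"
  shows "(D ^^ N1) p = 0 \<Longrightarrow> (D ^^ N2) q = 0 \<Longrightarrow> (D ^^ (N1 + N2)) (p * q) = 0"
proof (induction "N1 + N2" arbitrary: N1 N2 p q)
  case 0
  then show ?case by simp
next
  case (Suc M)
  show ?case
  proof (cases "N1 = 0 \<or> N2 = 0")
    case True
    then have "p * q = 0" using Suc.prems by auto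
    then show ?thesis by (simp add: der_funpow_0[OF D])
  next
    case False
    then obtain a b where ab: "N1 = Suc a" "N2 = Suc b" by (metis not0_implies_Suc)
    have M1: "M = Suc a + b" and M2: "M = a + Suc b" using Suc.hyps(2) ab by simp_all
    have q': "(D ^^ b) (D q) = 0" using Suc.prems(2) ab by (simp add: funpow_swap1)
    have p': "(D ^^ a) (D p) = 0" using Suc.prems(1) ab by (simp add: funpow_swap1)
    have i1: "(D ^^ M) (p * D q) = 0"
      using Suc.hyps(1)[of "Suc a" b p "D q"] M1 Suc.prems(1) ab q' by simp
    have i2: "(D ^^ M) (D p * q) = 0"
      using Suc.hyps(1)[of a "Suc b" "D p" q] M2 Suc.prems(2) ab p' by simp
    have "(D ^^ (N1 + N2)) (p * q) = (D ^^ M) (D (p * q))"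
      using Suc.hyps(2) by (metis funpow_Suc_right comp_apply)
    also have "\<dots> = 0" by (simp add: der_mult[OF D] der_funpow_add[OF D] i1 i2)
    finally show ?thesis .
  qed
qed

lemma nil_all:
  assumes D: "is_der D" and V: "\<And>x. \<exists>N. (D ^^ N) (Var x) = 0"
  shows "\<exists>N. (D ^^ N) p = 0"
proof (induction p rule: mpoly_induct)
  case (Const c)
  show ?case by (intro exI[of _ 1]) (simp add: der_Const[OF D])
next
  case (Var x)
  then show ?case by (rule V)
next
  case (add p q)
  then obtain N1 N2 where "(D ^^ N1) p = 0" "(D ^^ N2) q = 0" by auto
  then have "(D ^^ (N1 + N2)) p = 0" "(D ^^ (N1 + N2)) q = 0"
    by (auto intro: funpow_zero_mono[OF D])
  then show ?case by (intro exI[of _ "N1 + N2"]) (simp add: der_funpow_add[OF D])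
next
  case (mult p q)
  then obtain N1 N2 where "(D ^^ N1) p = 0" "(D ^^ N2) q = 0" by auto
  then show ?case by (intro exI[of _ "N1 + N2"]) (rule nil_mult[OF D])
qed

lemma funpow_of_nat_mult: "is_der D \<Longrightarrow> (D ^^ k) (of_nat c * p) = of_nat c * (D ^^ k) p"
  using der_funpow_scl[of D k "of_nat c" p] by (simp add: scl_of_nat)

lemma Dh1_Var_A_step: "Dh1 n (Var (A i j) :: 'k::comm_ring_1 mpoly) = (if Suc i + j \<le> n then of_nat (n - i - j) * Var (A (Suc i) j) else 0)"
  by (auto simp: ops_Var aa_def)

lemma Dh1_Var_A: "k \<ge> n - i \<Longrightarrow> (Dh1 n ^^ Suc k) (Var (A i j) :: 'k::comm_ring_1 mpoly) = 0"
proof (induction k arbitrary: i)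
  case 0
  then show ?case by (auto simp: ops_Var aa_def)
next
  case (Suc k)
  have "(Dh1 n ^^ Suc (Suc k)) (Var (A i j) :: 'k mpoly) = (Dh1 n ^^ Suc k) (Dh1 n (Var (A i j)))"
    by (metis funpow_Suc_right comp_apply)
  also have "\<dots> = 0"
  proof (cases "Suc i + j \<le> n")
    case True
    have "(Dh1 n ^^ Suc k) (Var (A (Suc i) j) :: 'k mpoly) = 0" using Suc.IH[of "Suc i"] Suc.prems by simp
    then show ?thesis using True
      by (simp only: Dh1_Var_A_step if_True funpow_of_nat_mult[OF is_der_ops(4)] mult_zero_right)
  next
    case False
    then show ?thesis by (simp only: Dh1_Var_A_step if_False der_funpow_0[OF is_der_ops(4)])
  qed
  finally show ?case .
qed

lemma Dh2_Var_A_step: "Dh2 n (Var (A i j) :: 'k::comm_ring_1 mpoly) = (if 1 \<le> i \<and> i + j \<le> n then of_nat i * Var (A (i - 1) (Suc j)) else 0)"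
  by (auto simp: ops_Var aa_def)

lemma Dh2_Var_A: "k \<ge> i \<Longrightarrow> (Dh2 n ^^ Suc k) (Var (A i j) :: 'k::comm_ring_1 mpoly) = 0"
proof (induction k arbitrary: i j)
  case 0
  then show ?case by (auto simp: ops_Var aa_def)
next
  case (Suc k)
  have "(Dh2 n ^^ Suc (Suc k)) (Var (A i j) :: 'k mpoly) = (Dh2 n ^^ Suc k) (Dh2 n (Var (A i j)))"
    by (metis funpow_Suc_right comp_apply)
  also have "\<dots> = 0"
  proof (cases "1 \<le> i \<and> i + j \<le> n")
    case True
    have "(Dh2 n ^^ Suc k) (Var (A (i - 1) (Suc j)) :: 'k mpoly) = 0" using Suc.IH[of "i - 1" "Suc j"] Suc.prems by simp
    then show ?thesis using True
      by (simp only: Dh2_Var_A_step simp_thms if_True funpow_of_nat_mult[OF is_der_ops(5)] mult_zero_right)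
  next
    case False
    then show ?thesis by (simp only: Dh2_Var_A_step if_False der_funpow_0[OF is_der_ops(5)])
  qed
  finally show ?case .
qed

lemma nil_Dh1: "\<exists>N. (Dh1 n ^^ N) (p :: 'k::comm_ring_1 mpoly) = 0"
proof (rule nil_all[OF is_der_ops(4)])
  fix x show "\<exists>N. (Dh1 n ^^ N) (Var x :: 'k mpoly) = 0"
  proof (cases x)
    case (A i j)
    have "(Dh1 n ^^ Suc n) (Var (A i j) :: 'k mpoly) = 0" by (rule Dh1_Var_A) simp
    then show ?thesis using A by blast
  next
    case (U k)
    have "(Dh1 n ^^ 2) (Var (U k) :: 'k mpoly) = 0"
      by (simp add: numeral_2_eq_2 ops_Var der_0[OF is_der_ops(4)])
    then show ?thesis using U by blast
  qed
qed

lemma nil_Dh2: "\<exists>N. (Dh2 n ^^ N) (p :: 'k::comm_ring_1 mpoly) = 0"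
proof (rule nil_all[OF is_der_ops(5)])
  fix x show "\<exists>N. (Dh2 n ^^ N) (Var x :: 'k mpoly) = 0"
  proof (cases x)
    case (A i j)
    have "(Dh2 n ^^ Suc i) (Var (A i j) :: 'k mpoly) = 0" by (rule Dh2_Var_A) simp
    then show ?thesis using A by blast
  next
    case (U k)
    have "(Dh2 n ^^ 2) (Var (U k) :: 'k mpoly) = 0"
      by (simp add: numeral_2_eq_2 ops_Var der_0[OF is_der_ops(5)])
    then show ?thesis using U by blast
  qed
qed

lemma ord_facts:
  assumes D: "is_der D" and N: "(D ^^ N) p = 0" and p: "p \<noteq> 0"
  shows "(D ^^ ord D p) p \<noteq> 0" "(D ^^ Suc (ord D p)) p = 0"
proof -
  let ?P = "\<lambda>s. (D ^^ s) p \<noteq> 0"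
  have bound: "y \<le> N" if "?P y" for y
  proof -
    show "y \<le> N"
    proof (rule ccontr)
      assume "\<not> y \<le> N"
      then have "(D ^^ y) p = 0" using funpow_zero_mono[OF D N] by simp
      with that show False by simp
    qed
  qed
  have P0: "?P 0" using p by simp
  show "(D ^^ ord D p) p \<noteq> 0" unfolding ord_def by (rule GreatestI_nat[where P="?P", OF P0 bound])
  show "(D ^^ Suc (ord D p)) p = 0"
  proof (rule ccontr)
    assume "(D ^^ Suc (ord D p)) p \<noteq> 0"
    then have "Suc (ord D p) \<le> ord D p" unfolding ord_def by (rule Greatest_le_nat[where P="?P", OF _ bound])
    then show False by simp
  qed
qed




theorem mainTheorem7:
  fixes n d :: nat and a :: "'k::field_char_0 mpoly"
  assumes "n \<ge> 1"
    and "irreducible_UT3 n a"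
    and "homogeneous a"
    and "isobaric n a"
    and "D1 n a = 0" and "D2 n a = 0" and "D3 n a = 0"
    and "ord (Dh1 n) a = 0"
    and "ord (Dh2 n) a = d"
  shows "iso_Gamma n
           (module.span scl
              {scl ((-1) ^ (i + j) / (\<Prod>t<i + j. of_nat (d - t)))
                   ((Dh2 n ^^ j) ((Dh3 n ^^ i) a)) | i j. i + j \<le> d})
           0 d \<and>
         contravariant n d
           (\<Sum>(i, j)\<in>{(i, j). i + j \<le> d}.
              scl ((-1) ^ (i + j) / (fact i * fact j))
                  ((Dh2 n ^^ j) ((Dh3 n ^^ i) a)
                   * Var (U 3) ^ (d - (i + j)) * Var (U 1) ^ i * Var (U 2) ^ j))"
proof -
  have anz: "a \<noteq> 0" and aKA: "a \<in> KA n" using assms(2) by (auto simp: irreducible_UT3_def UT3_inv_def)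
  obtain N1 where N1: "(Dh1 n ^^ N1) a = 0" using nil_Dh1 by blast
  obtain N2 where N2: "(Dh2 n ^^ N2) a = 0" using nil_Dh2 by blast
  have H1a: "Dh1 n a = 0" using ord_facts(2)[OF is_der_ops(4) N1 anz] assms(8) by simp
  have H2d: "(Dh2 n ^^ d) a \<noteq> 0" using ord_facts(1)[OF is_der_ops(5) N2 anz] assms(9) by simp
  have H2a: "(Dh2 n ^^ Suc d) a = 0" using ord_facts(2)[OF is_der_ops(5) N2 anz] assms(9) by simp
  have E1a: "E1 n a = 0" using C14[of n a] assms(5) H1a by (simp add: der_0[OF is_der_ops(1)] der_0[OF is_der_ops(4)])
  obtain c1 c2 where c: "E1 n a = scl c1 a" "E2 n a = scl c2 a" using assms(4) by (auto simp: isobaric_def)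
  have "D2 n ((Dh2 n ^^ Suc d) a) = scl (of_nat (Suc d) * (c2 - of_nat d)) ((Dh2 n ^^ d) a)"
    by (rule sl2_lower[where H="E2 n"]) (simp_all add: C7 C12 is_der_ops assms(6) c(2) del: scl_neg_numeral)
  moreover have "D2 n ((Dh2 n ^^ Suc d) a) = 0" by (simp only: H2a der_0[OF is_der_ops(2)])
  ultimately have "scl (of_nat (Suc d) * (c2 - of_nat d)) ((Dh2 n ^^ d) a) = 0" by simp
  then have "of_nat (Suc d) * (c2 - of_nat d) = 0" using H2d scl_eq_0_iff by blast
  moreover have "(of_nat (Suc d) :: 'k) \<noteq> 0" by (simp only: of_nat_eq_0_iff nat.simps not_False_eq_True)
  ultimately have "c2 = of_nat d" by simp
  then have E2a: "E2 n a = scl (of_nat d) a" using c(2) by simp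
  have H2a': "Dh2 n ((Dh2 n ^^ d) a) = 0" using H2a by simp
  interpret H: hw n d a
    by unfold_locales (simp_all add: anz aKA assms(5,6,7) H1a E1a E2a H2a')
  show ?thesis using H.iso_main H.contra_main by simp
qed



end
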